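(* Let $d\ge1$ and let $\mathfrak{T}:\mathcal{S}(\mathbb{R}^{2d})\to\mathcal{S}'(\mathbb{R}^{2d})$ be a non-zero linear operator such that there is a function $\Phi:\mathbb{R}^{4d}\to\mathbb{R}^{4d}$ (not assumed measurable) with $\mathfrak{T}\rho(\lambda)F=c\,\rho(\Phi(\lambda))\mathfrak{T}F$ for all $\lambda\in\mathbb{R}^{4d}$, $F\in\mathcal{S}(\mathbb{R}^{2d})$ (with constants $c\in\mathbb{C}$ possibly depending on $\lambda$). Assume in addition that either (i) there exists $F\in\mathcal{S}(\mathbb{R}^{2d})$ with $\mathfrak{T}F\neq0$ and $\mathfrak{T}F\in L^p(\mathbb{R}^{2d})$ for some $p<\infty$, or (ii) $\{\mathfrak{T}F:F\in\mathcal{S}(\mathbb{R}^{2d})\}$ is a weak*-dense subspace of $\mathcal{S}'(\mathbb{R}^{2d})$. Then $\Phi$ is additive, i.e., $\Phi(\lambda_1+\lambda_2)=\Phi(\lambda_1)+\Phi(\lambda_2)$ for all $\lambda_1,\lambda_2\in\mathbb{R}^{4d}$.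
   Context: For $x,\omega,t\in\mathbb{R}^{2d}$: $T_xF(t)=F(t-x)$, $M_\omega F(t)=e^{2\pi i\omega\cdot t}F(t)$, and for $(x,\omega)\in\mathbb{R}^{4d}$, $\rho(x,\omega)=T_{x/2}M_\omega T_{x/2}$, acting on $\mathcal{S}(\mathbb{R}^{2d})$ and by duality on $\mathcal{S}'(\mathbb{R}^{2d})$. *)

theory Defs
  imports "HOL-Analysis.Analysis"
begin

text \<open>The ambient space R^{2d} is an abstract Euclidean space 'a with even dimension;
  R^{4d} is 'a \<times> 'a (pairs (x, omega)).  Test functions are complex valued.\<close>

definition dirderiv :: "'a::euclidean_space \<Rightarrow> ('a \<Rightarrow> complex) \<Rightarrow> ('a \<Rightarrow> complex)" where
  "dirderiv v f = (\<lambda>x. vector_derivative (\<lambda>t::real. f (x + t *\<^sub>R v)) (at 0))"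

definition iter_pderiv :: "'a::euclidean_space list \<Rightarrow> ('a \<Rightarrow> complex) \<Rightarrow> ('a \<Rightarrow> complex)" where
  "iter_pderiv vs f = foldr dirderiv vs f"

definition schwartz :: "('a::euclidean_space \<Rightarrow> complex) set" where
  "schwartz = {f. \<forall>vs. set vs \<subseteq> Basis \<longrightarrow>
      (\<forall>x. iter_pderiv vs f differentiable at x) \<and>
      (\<forall>k::nat. bounded (range (\<lambda>x. (1 + norm x) ^ k * cmod (iter_pderiv vs f x))))}"

definition schwartz_seminorm :: "nat \<Rightarrow> ('a::euclidean_space \<Rightarrow> complex) \<Rightarrow> real" where
  "schwartz_seminorm N f =
     (\<Sum>vs\<in>{vs. set vs \<subseteq> Basis \<and> length vs \<le> N}. \<Sum>k\<le>N.
        (SUP x. (1 + norm x) ^ k * cmod (iter_pderiv vs f x)))"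

text \<open>Tempered distributions: continuous linear functionals on the Schwartz space,
  represented extensionally (value 0 outside the Schwartz space).\<close>
definition tempered :: "(('a::euclidean_space \<Rightarrow> complex) \<Rightarrow> complex) set" where
  "tempered = {u. (\<forall>f. f \<notin> schwartz \<longrightarrow> u f = 0) \<and>
      (\<forall>f\<in>schwartz. \<forall>g\<in>schwartz. u (\<lambda>x. f x + g x) = u f + u g) \<and>
      (\<forall>f\<in>schwartz. \<forall>c. u (\<lambda>x. c * f x) = c * u f) \<and>
      (\<exists>C N. \<forall>f\<in>schwartz. cmod (u f) \<le> C * schwartz_seminorm N f)}"

definition transl :: "'a::euclidean_space \<Rightarrow> ('a \<Rightarrow> complex) \<Rightarrow> ('a \<Rightarrow> complex)" where
  "transl x F = (\<lambda>t. F (t - x))"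

definition modul :: "'a::euclidean_space \<Rightarrow> ('a \<Rightarrow> complex) \<Rightarrow> ('a \<Rightarrow> complex)" where
  "modul \<omega> F = (\<lambda>t. exp (2 * of_real pi * \<i> * of_real (\<omega> \<bullet> t)) * F t)"

definition rho :: "'a::euclidean_space \<times> 'a \<Rightarrow> ('a \<Rightarrow> complex) \<Rightarrow> ('a \<Rightarrow> complex)" where
  "rho l = transl ((1/2) *\<^sub>R fst l) \<circ> modul (snd l) \<circ> transl ((1/2) *\<^sub>R fst l)"

text \<open>Extension to tempered distributions by duality (bilinear pairing):
  (T_x u)(f) = u(T_{-x} f), (M_\<omega> u)(f) = u(M_\<omega> f).\<close>
definition transl_dist :: "'a::euclidean_space \<Rightarrow> (('a \<Rightarrow> complex) \<Rightarrow> complex) \<Rightarrow> (('a \<Rightarrow> complex) \<Rightarrow> complex)" where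
  "transl_dist x u = (\<lambda>f. if f \<in> schwartz then u (transl (- x) f) else 0)"

definition modul_dist :: "'a::euclidean_space \<Rightarrow> (('a \<Rightarrow> complex) \<Rightarrow> complex) \<Rightarrow> (('a \<Rightarrow> complex) \<Rightarrow> complex)" where
  "modul_dist \<omega> u = (\<lambda>f. if f \<in> schwartz then u (modul \<omega> f) else 0)"

definition rho_dist :: "'a::euclidean_space \<times> 'a \<Rightarrow> (('a \<Rightarrow> complex) \<Rightarrow> complex) \<Rightarrow> (('a \<Rightarrow> complex) \<Rightarrow> complex)" where
  "rho_dist l = transl_dist ((1/2) *\<^sub>R fst l) \<circ> modul_dist (snd l) \<circ> transl_dist ((1/2) *\<^sub>R fst l)"

definition dist_in_Lp :: "real \<Rightarrow> (('a::euclidean_space \<Rightarrow> complex) \<Rightarrow> complex) \<Rightarrow> bool" where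
  "dist_in_Lp p u \<longleftrightarrow> (\<exists>g::'a \<Rightarrow> complex. g \<in> borel_measurable lborel \<and>
      integrable lborel (\<lambda>x. cmod (g x) powr p) \<and>
      (\<forall>f\<in>schwartz. integrable lborel (\<lambda>x. g x * f x) \<and>
                      u f = (LINT x|lborel. g x * f x)))"

definition weak_star_dense :: "(('a::euclidean_space \<Rightarrow> complex) \<Rightarrow> complex) set \<Rightarrow> bool" where
  "weak_star_dense A \<longleftrightarrow> A \<subseteq> tempered \<and>
     (\<forall>u\<in>tempered. \<forall>fs. finite fs \<longrightarrow> fs \<subseteq> schwartz \<longrightarrow> (\<forall>e>0.
        \<exists>v\<in>A. \<forall>f\<in>fs. cmod (u f - v f) < e))"

end

theory Submission
  imports Defs
begin

definition ex :: "'a::euclidean_space \<Rightarrow> 'a \<Rightarrow> complex" where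
  "ex w y = exp (2 * of_real pi * \<i> * of_real (w \<bullet> y))"

lemma lin_has_derivative:
  "((\<lambda>y::'a::euclidean_space. 2 * of_real pi * \<i> * of_real (w \<bullet> y)) has_derivative
     (\<lambda>h. 2 * of_real pi * \<i> * of_real (w \<bullet> h))) (at x)"
  by (intro derivative_eq_intros) auto

lemma ex_has_derivative:
  "(ex w has_derivative (\<lambda>h. ex w x * (2 * of_real pi * \<i> * of_real (w \<bullet> h)))) (at x)"
proof -
  have "((\<lambda>y. exp (2 * of_real pi * \<i> * of_real (w \<bullet> y))) has_derivative
     (\<lambda>h. exp (2 * of_real pi * \<i> * of_real (w \<bullet> x)) * (2 * of_real pi * \<i> * of_real (w \<bullet> h)))) (at x)"
    by (rule has_derivative_compose[OF lin_has_derivative, of exp "\<lambda>h. exp _ * h"])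
      (simp add: has_field_derivative_def[symmetric] DERIV_exp)
  then show ?thesis unfolding ex_def .
qed

lemma norm_ex[simp]: "norm (ex w y) = 1"
proof -
  have "ex w y = exp (\<i> * of_real (2 * pi * (w \<bullet> y)))" unfolding ex_def by (simp add: algebra_simps)
  then show ?thesis by (simp only: norm_exp_i_times)
qed

lemma iter_pderiv_Nil[simp]: "iter_pderiv [] f = f" by (simp add: iter_pderiv_def)
lemma iter_pderiv_Cons[simp]: "iter_pderiv (v#vs) f = dirderiv v (iter_pderiv vs f)"
  by (simp add: iter_pderiv_def)

lemma dirderiv_eq:
  assumes "(f has_derivative f') (at x)"
  shows "dirderiv v f x = f' v"
proof -
  have l: "((\<lambda>t::real. x + t *\<^sub>R v) has_derivative (\<lambda>t. t *\<^sub>R v)) (at 0)"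
    by (intro derivative_eq_intros) auto
  have "((\<lambda>t. f (x + t *\<^sub>R v)) has_derivative (\<lambda>t. f' (t *\<^sub>R v))) (at 0)"
    by (rule has_derivative_compose[OF l]) (simp add: assms)
  moreover have "(\<lambda>t. f' (t *\<^sub>R v)) = (\<lambda>t. t *\<^sub>R f' v)"
    using has_derivative_linear[OF assms] by (simp add: linear_scale)
  ultimately have "((\<lambda>t. f (x + t *\<^sub>R v)) has_vector_derivative f' v) (at 0)"
    by (simp add: has_vector_derivative_def)
  then show ?thesis unfolding dirderiv_def by (simp add: vector_derivative_at)
qed

lemma schwartzI:
  assumes "\<And>vs x. set vs \<subseteq> Basis \<Longrightarrow> iter_pderiv vs f differentiable at x"
    and "\<And>vs k. set vs \<subseteq> Basis \<Longrightarrow> \<exists>B. \<forall>x. (1 + norm x) ^ k * cmod (iter_pderiv vs f x) \<le> B"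
  shows "f \<in> schwartz"
  unfolding schwartz_def
proof (safe)
  fix vs :: "'a list" and x assume "set vs \<subseteq> Basis"
  then show "iter_pderiv vs f differentiable at x" using assms(1) by auto
next
  fix vs :: "'a list" and k assume "set vs \<subseteq> Basis"
  then obtain B where B: "\<forall>x. (1 + norm x) ^ k * cmod (iter_pderiv vs f x) \<le> B" using assms(2) by blast
  show "bounded (range (\<lambda>x. (1 + norm x) ^ k * cmod (iter_pderiv vs f x)))"
    unfolding bounded_iff using B by (auto intro!: exI[of _ B])
qed

lemma schwartzD1:
  assumes "f \<in> schwartz" "set vs \<subseteq> Basis"
  shows "iter_pderiv vs f differentiable at x"
  using assms unfolding schwartz_def by auto

lemma schwartzD2:
  assumes "f \<in> schwartz" "set vs \<subseteq> Basis"
  shows "\<exists>B. \<forall>x. (1 + norm x) ^ k * cmod (iter_pderiv vs f x) \<le> B"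
proof -
  have "bounded (range (\<lambda>x. (1 + norm x) ^ k * cmod (iter_pderiv vs f x)))"
    using assms unfolding schwartz_def by auto
  then obtain B where "\<forall>y\<in>range (\<lambda>x. (1 + norm x) ^ k * cmod (iter_pderiv vs f x)). norm y \<le> B"
    unfolding bounded_iff by blast
  then show ?thesis by (intro exI[of _ B]) auto
qed

lemma schwartz_bound0:
  assumes "f \<in> schwartz"
  shows "\<exists>B. \<forall>x. (1 + norm x) ^ k * cmod (f x) \<le> B"
  using schwartzD2[OF assms, of "[]" k] by simp

lemma schwartz_differentiable:
  assumes "f \<in> schwartz"
  shows "f differentiable at x"
  using schwartzD1[OF assms, of "[]"] by simp

lemma dirderiv_transl: "dirderiv v (transl a f) = transl a (dirderiv v f)"
  unfolding dirderiv_def transl_def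
  by (rule ext) (simp add: algebra_simps)

lemma iter_pderiv_transl: "iter_pderiv vs (transl a f) = transl a (iter_pderiv vs f)"
  by (induction vs) (simp_all add: dirderiv_transl)

lemma norm_shift_le: "1 + norm (x::'a::real_normed_vector) \<le> (1 + norm a) * (1 + norm (x - a))"
proof -
  have "norm x \<le> norm a + norm (x - a)" by (metis add_diff_cancel_left' diff_add_cancel norm_triangle_ineq)
  moreover have "0 \<le> norm a * norm (x - a)" by simp
  moreover have "(1 + norm a) * (1 + norm (x - a)) = 1 + norm a + norm (x - a) + norm a * norm (x - a)"
    by (simp add: algebra_simps)
  ultimately show ?thesis by linarith
qed

lemma schwartz_transl:
  assumes f: "f \<in> schwartz"
  shows "transl a f \<in> schwartz"
proof (rule schwartzI)
  fix vs :: "'a list" and x assume vs: "set vs \<subseteq> Basis"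
  have "iter_pderiv vs f differentiable at ((\<lambda>x. x - a) x)" using schwartzD1[OF f vs] .
  moreover have "(\<lambda>x. x - a) differentiable at x" by (intro derivative_intros)
  ultimately have "(iter_pderiv vs f \<circ> (\<lambda>x. x - a)) differentiable at x"
    by (intro differentiable_chain_at)
  then show "iter_pderiv vs (transl a f) differentiable at x"
    unfolding iter_pderiv_transl by (simp add: transl_def o_def)
next
  fix vs :: "'a list" and k assume vs: "set vs \<subseteq> Basis"
  obtain B where B: "\<forall>x. (1 + norm x) ^ k * cmod (iter_pderiv vs f x) \<le> B"
    using schwartzD2[OF f vs] by blast
  show "\<exists>B. \<forall>x. (1 + norm x) ^ k * cmod (iter_pderiv vs (transl a f) x) \<le> B"
  proof (intro exI allI)
    fix x
    have "(1 + norm x) ^ k \<le> ((1 + norm a) * (1 + norm (x - a))) ^ k"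
      by (intro power_mono norm_shift_le) auto
    then have "(1 + norm x) ^ k * cmod (iter_pderiv vs f (x - a))
        \<le> ((1 + norm a) * (1 + norm (x - a))) ^ k * cmod (iter_pderiv vs f (x - a))"
      by (intro mult_right_mono) auto
    also have "\<dots> = (1 + norm a) ^ k * ((1 + norm (x - a)) ^ k * cmod (iter_pderiv vs f (x - a)))"
      by (simp add: power_mult_distrib)
    also have "\<dots> \<le> (1 + norm a) ^ k * B"
      using B by (intro mult_left_mono) auto
    finally show "(1 + norm x) ^ k * cmod (iter_pderiv vs (transl a f) x) \<le> (1 + norm a) ^ k * B"
      unfolding iter_pderiv_transl by (simp add: transl_def)
  qed
qed

inductive_set mset :: "'a::euclidean_space \<Rightarrow> ('a \<Rightarrow> complex) \<Rightarrow> ('a \<Rightarrow> complex) set"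
  for w f where
  base: "set ws \<subseteq> Basis \<Longrightarrow> (\<lambda>y. c * ex w y * iter_pderiv ws f y) \<in> mset w f"
| add: "g \<in> mset w f \<Longrightarrow> h \<in> mset w f \<Longrightarrow> (\<lambda>y. g y + h y) \<in> mset w f"

lemma mset_props:
  assumes f: "f \<in> schwartz" and g: "g \<in> mset w f"
  shows "(\<forall>x. g differentiable at x) \<and> (\<forall>v\<in>Basis. dirderiv v g \<in> mset w f) \<and>
         (\<forall>k. \<exists>B. \<forall>x. (1 + norm x) ^ k * cmod (g x) \<le> B)"
  using g
proof (induction rule: mset.induct)
  case (base ws c)
  let ?D = "iter_pderiv ws f"
  have dD: "\<And>x. ?D differentiable at x" using schwartzD1[OF f base] .
  have hd: "\<And>x. \<exists>D'. (?D has_derivative D') (at x)" using dD unfolding differentiable_def by blast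
  have gd: "\<And>x D'. (?D has_derivative D') (at x) \<Longrightarrow>
     ((\<lambda>y. c * ex w y * ?D y) has_derivative
       (\<lambda>h. c * (ex w x * (2 * of_real pi * \<i> * of_real (w \<bullet> h))) * ?D x + c * ex w x * D' h)) (at x)"
    by (rule has_derivative_eq_rhs[OF has_derivative_mult[OF has_derivative_mult[OF has_derivative_const ex_has_derivative]]])
      (auto simp: algebra_simps fun_eq_iff)
  have P1: "\<forall>x. (\<lambda>y. c * ex w y * ?D y) differentiable at x"
    using hd gd unfolding differentiable_def by blast
  have P2: "dirderiv v (\<lambda>y. c * ex w y * ?D y) \<in> mset w f" if v: "v \<in> Basis" for v
  proof -
    have eq: "dirderiv v (\<lambda>y. c * ex w y * ?D y) =
      (\<lambda>y. (\<lambda>y. (c * (2 * of_real pi * \<i> * of_real (w \<bullet> v))) * ex w y * iter_pderiv ws f y) y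
         + (\<lambda>y. c * ex w y * iter_pderiv (v # ws) f y) y)"
    proof (rule ext)
      fix x
      obtain D' where D': "(?D has_derivative D') (at x)" using hd by blast
      have "dirderiv v (\<lambda>y. c * ex w y * ?D y) x =
          c * (ex w x * (2 * of_real pi * \<i> * of_real (w \<bullet> v))) * ?D x + c * ex w x * D' v"
        by (rule dirderiv_eq[OF gd[OF D']])
      moreover have "D' v = iter_pderiv (v # ws) f x"
        using dirderiv_eq[OF D', of v] by simp
      ultimately show "dirderiv v (\<lambda>y. c * ex w y * ?D y) x =
        (\<lambda>y. (c * (2 * of_real pi * \<i> * of_real (w \<bullet> v))) * ex w y * iter_pderiv ws f y) x
         + (\<lambda>y. c * ex w y * iter_pderiv (v # ws) f y) x"
        by (simp add: algebra_simps)
    qed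
    show ?thesis unfolding eq
      by (intro mset.add mset.base) (use base v in auto)
  qed
  have P3: "\<exists>B. \<forall>x. (1 + norm x) ^ k * cmod (c * ex w x * ?D x) \<le> B" for k
  proof -
    obtain B where B: "\<forall>x. (1 + norm x) ^ k * cmod (?D x) \<le> B" using schwartzD2[OF f base] by blast
    show ?thesis
    proof (intro exI allI)
      fix x
      have "(1 + norm x) ^ k * cmod (c * ex w x * ?D x) = cmod c * ((1 + norm x) ^ k * cmod (?D x))"
        by (simp add: norm_mult)
      also have "\<dots> \<le> cmod c * B" using B by (intro mult_left_mono) auto
      finally show "(1 + norm x) ^ k * cmod (c * ex w x * ?D x) \<le> cmod c * B" .
    qed
  qed
  show ?case using P1 P2 P3 by blast
next
  case (add g h)
  have P1: "\<forall>x. (\<lambda>y. g y + h y) differentiable at x"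
    using add.IH by (auto intro: differentiable_add)
  have P2: "dirderiv v (\<lambda>y. g y + h y) \<in> mset w f" if v: "v \<in> Basis" for v
  proof -
    have eq: "dirderiv v (\<lambda>y. g y + h y) = (\<lambda>y. dirderiv v g y + dirderiv v h y)"
    proof (rule ext)
      fix x
      obtain G where G: "(g has_derivative G) (at x)" using add.IH unfolding differentiable_def by blast
      obtain H where H: "(h has_derivative H) (at x)" using add.IH unfolding differentiable_def by blast
      have "((\<lambda>y. g y + h y) has_derivative (\<lambda>z. G z + H z)) (at x)" by (intro derivative_intros G H)
      then show "dirderiv v (\<lambda>y. g y + h y) x = dirderiv v g x + dirderiv v h x"
        using dirderiv_eq[OF G] dirderiv_eq[OF H] dirderiv_eq by metis
    qed
    show ?thesis unfolding eq using add.IH v by (intro mset.add) auto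
  qed
  have P3: "\<exists>B. \<forall>x. (1 + norm x) ^ k * cmod (g x + h x) \<le> B" for k
  proof -
    obtain B1 where B1: "\<forall>x. (1 + norm x) ^ k * cmod (g x) \<le> B1" using add.IH by blast
    obtain B2 where B2: "\<forall>x. (1 + norm x) ^ k * cmod (h x) \<le> B2" using add.IH by blast
    show ?thesis
    proof (intro exI allI)
      fix x
      have "(1 + norm x) ^ k * cmod (g x + h x) \<le> (1 + norm x) ^ k * (cmod (g x) + cmod (h x))"
        by (intro mult_left_mono norm_triangle_ineq) auto
      also have "\<dots> \<le> B1 + B2" using B1 B2 by (simp add: algebra_simps add_mono)
      finally show "(1 + norm x) ^ k * cmod (g x + h x) \<le> B1 + B2" .
    qed
  qed
  show ?case using P1 P2 P3 by blast
qed

lemma iter_pderiv_modul_mset: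
  assumes f: "f \<in> schwartz" and vs: "set vs \<subseteq> Basis"
  shows "iter_pderiv vs (modul w f) \<in> mset w f"
  using vs
proof (induction vs)
  case Nil
  have "(\<lambda>y. 1 * ex w y * iter_pderiv [] f y) \<in> mset w f" by (rule mset.base) auto
  then show ?case by (simp add: modul_def ex_def)
next
  case (Cons v vs)
  then have "iter_pderiv vs (modul w f) \<in> mset w f" by auto
  then show ?case using mset_props[OF f] Cons.prems by auto
qed

lemma schwartz_modul:
  assumes f: "f \<in> schwartz"
  shows "modul w f \<in> schwartz"
proof (rule schwartzI)
  fix vs :: "'a list" and x assume "set vs \<subseteq> Basis"
  then show "iter_pderiv vs (modul w f) differentiable at x"
    using mset_props[OF f iter_pderiv_modul_mset[OF f]] by blast
next
  fix vs :: "'a list" and k assume "set vs \<subseteq> Basis"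
  then show "\<exists>B. \<forall>x. (1 + norm x) ^ k * cmod (iter_pderiv vs (modul w f) x) \<le> B"
    using mset_props[OF f iter_pderiv_modul_mset[OF f]] by blast
qed

lemma schwartz_rho:
  assumes "f \<in> schwartz"
  shows "rho l f \<in> schwartz"
  using assms unfolding rho_def by (simp add: schwartz_transl schwartz_modul)

definition e1 :: "real \<Rightarrow> complex" where
  "e1 r = exp (2 * of_real pi * \<i> * of_real r)"

lemma ex_e1: "ex w y = e1 (w \<bullet> y)" by (simp add: ex_def e1_def)

lemma e1_add: "e1 (a + b) = e1 a * e1 b"
  unfolding e1_def by (simp add: distrib_left exp_add)

lemma e1_zero[simp]: "e1 0 = 1" by (simp add: e1_def)
lemma e1_nonzero[simp]: "e1 a \<noteq> 0" by (simp add: e1_def)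
lemma e1_half: "e1 (1/2) = -1"
proof -
  have "e1 (1/2) = exp (of_real pi * \<i>)" unfolding e1_def by simp
  then show ?thesis by simp
qed

lemma half_half: "(1/2::real) *\<^sub>R x + (1/2) *\<^sub>R x = (x::'a::real_vector)"
  using scaleR_add_left[of "1/2::real" "1/2" x] by simp

lemma rho_eq: "rho (x, w) F = (\<lambda>t. e1 (w \<bullet> (t - (1/2) *\<^sub>R x)) * F (t - x))"
proof (rule ext)
  fix t :: 'a
  have h: "t - (1/2) *\<^sub>R x - (1/2) *\<^sub>R x = t - x"
    using half_half[of x] by (metis diff_diff_eq)
  show "rho (x, w) F t = e1 (w \<bullet> (t - (1/2) *\<^sub>R x)) * F (t - x)"
    unfolding rho_def transl_def modul_def e1_def o_def fst_conv snd_conv h ..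
qed

definition sig :: "('a::euclidean_space \<times> 'a) \<Rightarrow> ('a \<times> 'a) \<Rightarrow> complex" where
  "sig l1 l2 = e1 ((snd l1 \<bullet> fst l2 - snd l2 \<bullet> fst l1) / 2)"

lemma sig_nonzero[simp]: "sig l1 l2 \<noteq> 0" by (simp add: sig_def)

lemma rho_rho: "rho l1 (rho l2 F) = (\<lambda>t. sig l1 l2 * rho (l1 + l2) F t)"
proof -
  obtain x1 w1 where l1: "l1 = (x1, w1)" by (cases l1)
  obtain x2 w2 where l2: "l2 = (x2, w2)" by (cases l2)
  show ?thesis
  proof (rule ext)
    fix t :: 'a
    have ex: "w1 \<bullet> (t - (1/2) *\<^sub>R x1) + w2 \<bullet> (t - x1 - (1/2) *\<^sub>R x2) =
        (w1 \<bullet> x2 - w2 \<bullet> x1) / 2 + (w1 + w2) \<bullet> (t - (1/2) *\<^sub>R (x1 + x2))"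
      by (simp add: inner_diff_right inner_add_left inner_add_right inner_commute algebra_simps)
        (simp add: field_simps)
    have "e1 (w1 \<bullet> (t - (1/2) *\<^sub>R x1)) * e1 (w2 \<bullet> (t - x1 - (1/2) *\<^sub>R x2)) =
        e1 ((w1 \<bullet> x2 - w2 \<bullet> x1) / 2) * e1 ((w1 + w2) \<bullet> (t - (1/2) *\<^sub>R (x1 + x2)))"
      by (simp only: e1_add[symmetric] ex)
    then show "rho l1 (rho l2 F) t = sig l1 l2 * rho (l1 + l2) F t"
      unfolding l1 l2 by (simp add: rho_eq sig_def diff_diff_eq mult.assoc[symmetric])
  qed
qed

lemma rho_zero: "rho 0 F = F"
  by (simp add: zero_prod_def rho_eq)

lemma sig_neg: "sig l (- l) = 1"
  by (simp add: sig_def)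

lemma rho_inv: "rho l (rho (- l) F) = F"
  by (simp add: rho_rho sig_neg rho_zero)

definition neg :: "'a::euclidean_space \<times> 'a \<Rightarrow> 'a \<times> 'a" where
  "neg l = (- fst l, snd l)"

lemma neg_add: "neg (m + n) = neg m + neg n" by (simp add: neg_def)

lemma rho_dist_eq:
  "rho_dist m u f = (if f \<in> schwartz then u (rho (neg m) f) else 0)"
proof -
  have *: "(1/2::real) *\<^sub>R (- x) = - ((1/2) *\<^sub>R x)" for x :: 'a by simp
  show ?thesis
    by (auto simp: rho_dist_def transl_dist_def modul_dist_def rho_def neg_def
      schwartz_transl schwartz_modul)
qed

definition tau :: "('a::euclidean_space \<times> 'a) \<Rightarrow> ('a \<times> 'a) \<Rightarrow> complex" where
  "tau m n = sig (neg n) (neg m)"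

lemma tau_nonzero[simp]: "tau m n \<noteq> 0" by (simp add: tau_def)

lemma temperedD:
  assumes "u \<in> tempered"
  shows "f \<notin> schwartz \<Longrightarrow> u f = 0"
    and "f \<in> schwartz \<Longrightarrow> u (\<lambda>x. c * f x) = c * u f"
  using assms unfolding tempered_def by auto

lemma rho_dist_rho_dist:
  assumes u: "u \<in> tempered"
  shows "rho_dist m (rho_dist n u) = (\<lambda>f. tau m n * rho_dist (m + n) u f)"
proof (rule ext)
  fix f :: "'a \<Rightarrow> complex"
  show "rho_dist m (rho_dist n u) f = tau m n * rho_dist (m + n) u f"
  proof (cases "f \<in> schwartz")
    case True
    have "rho_dist m (rho_dist n u) f = u (rho (neg n) (rho (neg m) f))"
      using True by (simp add: rho_dist_eq schwartz_rho)
    also have "\<dots> = u (\<lambda>t. sig (neg n) (neg m) * rho (neg n + neg m) f t)"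
      by (simp add: rho_rho)
    also have "\<dots> = sig (neg n) (neg m) * u (rho (neg (m + n)) f)"
      using temperedD(2)[OF u schwartz_rho[OF True]] by (simp add: neg_add add.commute)
    finally show ?thesis using True by (simp add: rho_dist_eq tau_def)
  next
    case False
    then show ?thesis by (simp add: rho_dist_eq)
  qed
qed

lemma rho_dist_scal: "rho_dist m (\<lambda>f. c * u f) = (\<lambda>f. c * rho_dist m u f)"
  by (auto simp: rho_dist_eq fun_eq_iff)

lemma rho_dist_zero:
  assumes u: "u \<in> tempered"
  shows "rho_dist 0 u = u"
proof (rule ext)
  fix f :: "'a \<Rightarrow> complex"
  have "neg (0::'a \<times> 'a) = 0" by (simp add: neg_def zero_prod_def)
  then show "rho_dist 0 u f = u f"
    using temperedD(1)[OF u] by (auto simp: rho_dist_eq rho_zero)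
qed

lemma dirderiv_add:
  assumes "F differentiable at x" "G differentiable at x"
  shows "dirderiv v (\<lambda>y. F y + G y) x = dirderiv v F x + dirderiv v G x"
proof -
  obtain F' where F': "(F has_derivative F') (at x)" using assms(1) unfolding differentiable_def by blast
  obtain G' where G': "(G has_derivative G') (at x)" using assms(2) unfolding differentiable_def by blast
  have "((\<lambda>y. F y + G y) has_derivative (\<lambda>z. F' z + G' z)) (at x)" by (intro derivative_intros F' G')
  then show ?thesis using dirderiv_eq[OF F'] dirderiv_eq[OF G'] dirderiv_eq by metis
qed

lemma dirderiv_cmul:
  assumes "F differentiable at x"
  shows "dirderiv v (\<lambda>y. c * F y) x = c * dirderiv v F x"
proof -
  obtain F' where F': "(F has_derivative F') (at x)" using assms(1) unfolding differentiable_def by blast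
  have "((\<lambda>y. c * F y) has_derivative (\<lambda>z. c * F' z)) (at x)" by (intro derivative_intros F')
  then show ?thesis using dirderiv_eq[OF F'] dirderiv_eq by metis
qed

lemma iter_pderiv_add:
  assumes f: "f \<in> schwartz" and g: "g \<in> schwartz" and vs: "set vs \<subseteq> Basis"
  shows "iter_pderiv vs (\<lambda>x. f x + g x) = (\<lambda>x. iter_pderiv vs f x + iter_pderiv vs g x)"
  using vs
proof (induction vs)
  case Nil then show ?case by simp
next
  case (Cons v vs)
  then have IH: "iter_pderiv vs (\<lambda>x. f x + g x) = (\<lambda>x. iter_pderiv vs f x + iter_pderiv vs g x)"
    and vs': "set vs \<subseteq> Basis" by auto
  show ?case
    by (simp add: IH fun_eq_iff dirderiv_add schwartzD1[OF f vs'] schwartzD1[OF g vs'])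
qed

lemma iter_pderiv_cmul:
  assumes f: "f \<in> schwartz" and vs: "set vs \<subseteq> Basis"
  shows "iter_pderiv vs (\<lambda>x. c * f x) = (\<lambda>x. c * iter_pderiv vs f x)"
  using vs
proof (induction vs)
  case Nil then show ?case by simp
next
  case (Cons v vs)
  then have IH: "iter_pderiv vs (\<lambda>x. c * f x) = (\<lambda>x. c * iter_pderiv vs f x)"
    and vs': "set vs \<subseteq> Basis" by auto
  show ?case
    by (simp add: IH fun_eq_iff dirderiv_cmul schwartzD1[OF f vs'])
qed

lemma schwartz_add:
  assumes f: "f \<in> schwartz" and g: "g \<in> schwartz"
  shows "(\<lambda>x. f x + g x) \<in> schwartz"
proof (rule schwartzI)
  fix vs :: "'a list" and x assume vs: "set vs \<subseteq> Basis"
  show "iter_pderiv vs (\<lambda>x. f x + g x) differentiable at x"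
    unfolding iter_pderiv_add[OF f g vs]
    by (intro differentiable_add schwartzD1[OF f vs] schwartzD1[OF g vs])
next
  fix vs :: "'a list" and k assume vs: "set vs \<subseteq> Basis"
  obtain B1 where B1: "\<forall>x. (1 + norm x) ^ k * cmod (iter_pderiv vs f x) \<le> B1" using schwartzD2[OF f vs] by blast
  obtain B2 where B2: "\<forall>x. (1 + norm x) ^ k * cmod (iter_pderiv vs g x) \<le> B2" using schwartzD2[OF g vs] by blast
  show "\<exists>B. \<forall>x. (1 + norm x) ^ k * cmod (iter_pderiv vs (\<lambda>x. f x + g x) x) \<le> B"
  proof (intro exI allI)
    fix x
    have "(1 + norm x) ^ k * cmod (iter_pderiv vs f x + iter_pderiv vs g x)
       \<le> (1 + norm x) ^ k * (cmod (iter_pderiv vs f x) + cmod (iter_pderiv vs g x))"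
      by (intro mult_left_mono norm_triangle_ineq) auto
    also have "\<dots> \<le> B1 + B2" using B1 B2 by (simp add: algebra_simps add_mono)
    finally show "(1 + norm x) ^ k * cmod (iter_pderiv vs (\<lambda>x. f x + g x) x) \<le> B1 + B2"
      unfolding iter_pderiv_add[OF f g vs] .
  qed
qed

lemma schwartz_cmul:
  assumes f: "f \<in> schwartz"
  shows "(\<lambda>x. c * f x) \<in> schwartz"
proof (rule schwartzI)
  fix vs :: "'a list" and x assume vs: "set vs \<subseteq> Basis"
  show "iter_pderiv vs (\<lambda>x. c * f x) differentiable at x"
    unfolding iter_pderiv_cmul[OF f vs]
    by (intro differentiable_mult differentiable_const schwartzD1[OF f vs])
next
  fix vs :: "'a list" and k assume vs: "set vs \<subseteq> Basis"
  obtain B1 where B1: "\<forall>x. (1 + norm x) ^ k * cmod (iter_pderiv vs f x) \<le> B1" using schwartzD2[OF f vs] by blast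
  show "\<exists>B. \<forall>x. (1 + norm x) ^ k * cmod (iter_pderiv vs (\<lambda>x. c * f x) x) \<le> B"
  proof (intro exI allI)
    fix x
    have "(1 + norm x) ^ k * cmod (c * iter_pderiv vs f x) = cmod c * ((1 + norm x) ^ k * cmod (iter_pderiv vs f x))"
      by (simp add: norm_mult)
    also have "\<dots> \<le> cmod c * B1" using B1 by (intro mult_left_mono) auto
    finally show "(1 + norm x) ^ k * cmod (iter_pderiv vs (\<lambda>x. c * f x) x) \<le> cmod c * B1"
      unfolding iter_pderiv_cmul[OF f vs] .
  qed
qed

lemma delta_tempered: "(\<lambda>f. if f \<in> schwartz then f y else 0) \<in> tempered"
  unfolding tempered_def
proof (intro CollectI conjI ballI allI impI)
  show "\<exists>C N. \<forall>f\<in>schwartz. cmod (if f \<in> schwartz then f y else 0) \<le> C * schwartz_seminorm N f"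
  proof (intro exI ballI)
    fix f :: "'a \<Rightarrow> complex" assume f: "f \<in> schwartz"
    have set: "{vs::'a list. set vs \<subseteq> Basis \<and> length vs \<le> 0} = {[]}" by auto
    have sn: "schwartz_seminorm 0 f = (SUP x. cmod (f x))"
      unfolding schwartz_seminorm_def set by simp
    obtain B where B: "\<forall>x. (1 + norm x) ^ 0 * cmod (f x) \<le> B" using schwartz_bound0[OF f] by blast
    have "cmod (f y) \<le> (SUP x. cmod (f x))"
      by (rule cSUP_upper) (use B in \<open>auto intro!: bdd_aboveI2\<close>)
    then show "cmod (if f \<in> schwartz then f y else 0) \<le> 1 * schwartz_seminorm 0 f"
      using f sn by simp
  qed
qed (auto simp: schwartz_add schwartz_cmul)

lemma decay_contra:
  assumes F: "F \<in> schwartz" and y0: "F y0 \<noteq> 0" and x: "x \<noteq> 0"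
    and grow: "\<forall>n::nat. cmod (F y0) \<le> cmod (F (y0 + real n *\<^sub>R x))"
  shows False
proof -
  obtain B where B: "\<forall>z. (1 + norm z) ^ 1 * cmod (F z) \<le> B" using schwartz_bound0[OF F] by blast
  define m where "m = cmod (F y0)"
  have m: "m > 0" using y0 by (simp add: m_def)
  have nx: "norm x > 0" using x by simp
  obtain n :: nat where n: "(B / m + norm y0) / norm x < real n" using reals_Archimedean2 by blast
  then have "B / m + norm y0 < real n * norm x" using nx by (simp add: field_simps)
  then have n2: "B / m < real n * norm x - norm y0" by simp
  have "norm (real n *\<^sub>R x) \<le> norm (y0 + real n *\<^sub>R x) + norm y0"
    by (metis add.commute add_diff_cancel_left' norm_triangle_ineq4 add.left_commute norm_minus_commute
        diff_add_cancel norm_triangle_sub)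
  then have n3: "real n * norm x - norm y0 \<le> norm (y0 + real n *\<^sub>R x)" by simp
  have "B / m < norm (y0 + real n *\<^sub>R x)" using n2 n3 by linarith
  then have "B < norm (y0 + real n *\<^sub>R x) * m" using m by (simp add: field_simps)
  also have "\<dots> \<le> (1 + norm (y0 + real n *\<^sub>R x)) * m" using m by simp
  also have "\<dots> \<le> (1 + norm (y0 + real n *\<^sub>R x)) * cmod (F (y0 + real n *\<^sub>R x))"
    using grow m_def by (intro mult_left_mono) auto
  also have "\<dots> \<le> B" using B by simp
  finally show False by simp
qed

lemma reduction:
  fixes T :: "('a::euclidean_space \<Rightarrow> complex) \<Rightarrow> (('a \<Rightarrow> complex) \<Rightarrow> complex)"
    and \<Phi> :: "'a \<times> 'a \<Rightarrow> 'a \<times> 'a"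
  assumes maps: "\<forall>F\<in>schwartz. T F \<in> tempered"
    and lin_smult: "\<forall>F\<in>schwartz. \<forall>c. T (\<lambda>x. c * F x) = (\<lambda>f. c * T F f)"
    and nonzero: "\<exists>F\<in>schwartz. T F \<noteq> (\<lambda>f. 0)"
    and covar: "\<forall>l. \<exists>c::complex. \<forall>F\<in>schwartz.
                   T (rho l F) = (\<lambda>f. c * rho_dist (\<Phi> l) (T F) f)"
  shows "\<exists>k. \<forall>F\<in>schwartz. rho_dist (\<Phi> (l1 + l2) - (\<Phi> l1 + \<Phi> l2)) (T F) = (\<lambda>f. k * T F f)"
proof -
  obtain F0 where F0: "F0 \<in> schwartz" "T F0 \<noteq> (\<lambda>f. 0)" using nonzero by blast
  have cnz: "c \<noteq> 0" if c: "\<forall>F\<in>schwartz. T (rho l F) = (\<lambda>f. c * rho_dist (\<Phi> l) (T F) f)" for l c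
  proof
    assume "c = 0"
    then have "T (rho l (rho (- l) F0)) = (\<lambda>f. 0)" using c schwartz_rho[OF F0(1)] by simp
    then show False using F0 by (simp add: rho_inv)
  qed
  obtain c1 where c1: "\<forall>F\<in>schwartz. T (rho l1 F) = (\<lambda>f. c1 * rho_dist (\<Phi> l1) (T F) f)" using covar by blast
  obtain c2 where c2: "\<forall>F\<in>schwartz. T (rho l2 F) = (\<lambda>f. c2 * rho_dist (\<Phi> l2) (T F) f)" using covar by blast
  obtain c3 where c3: "\<forall>F\<in>schwartz. T (rho (l1 + l2) F) = (\<lambda>f. c3 * rho_dist (\<Phi> (l1 + l2)) (T F) f)"
    using covar by blast
  have c1nz: "c1 \<noteq> 0" using cnz[OF c1] .
  have c2nz: "c2 \<noteq> 0" using cnz[OF c2] .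
  define \<mu> where "\<mu> = \<Phi> (l1 + l2)"
  define \<nu> where "\<nu> = \<Phi> l1 + \<Phi> l2"
  define \<alpha> where "\<alpha> = sig l1 l2 * c3 * tau (- \<nu>) \<mu>"
  define \<beta> where "\<beta> = c1 * c2 * tau (\<Phi> l1) (\<Phi> l2) * tau (- \<nu>) \<nu>"
  have \<beta>nz: "\<beta> \<noteq> 0" using c1nz c2nz by (simp add: \<beta>_def)
  have key: "\<alpha> * rho_dist (\<mu> - \<nu>) (T F) f = \<beta> * T F f" if F: "F \<in> schwartz" for F f
  proof -
    let ?u = "T F"
    have u: "?u \<in> tempered" using maps F by blast
    have "T (rho l1 (rho l2 F)) = (\<lambda>f. c1 * rho_dist (\<Phi> l1) (T (rho l2 F)) f)"
      using c1 schwartz_rho[OF F] by blast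
    also have "\<dots> = (\<lambda>f. c1 * (c2 * rho_dist (\<Phi> l1) (rho_dist (\<Phi> l2) ?u) f))"
      using c2 F by (simp add: rho_dist_scal)
    also have "\<dots> = (\<lambda>f. c1 * (c2 * (tau (\<Phi> l1) (\<Phi> l2) * rho_dist \<nu> ?u f)))"
      by (simp add: rho_dist_rho_dist[OF u] \<nu>_def)
    finally have A: "T (rho l1 (rho l2 F)) = (\<lambda>f. c1 * (c2 * (tau (\<Phi> l1) (\<Phi> l2) * rho_dist \<nu> ?u f)))" .
    have "T (rho l1 (rho l2 F)) = T (\<lambda>t. sig l1 l2 * rho (l1 + l2) F t)" by (simp add: rho_rho)
    also have "\<dots> = (\<lambda>f. sig l1 l2 * T (rho (l1 + l2) F) f)"
      using lin_smult schwartz_rho[OF F] by blast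
    also have "\<dots> = (\<lambda>f. sig l1 l2 * (c3 * rho_dist \<mu> ?u f))"
      using c3 F by (simp add: \<mu>_def)
    finally have B: "T (rho l1 (rho l2 F)) = (\<lambda>f. sig l1 l2 * (c3 * rho_dist \<mu> ?u f))" .
    have E: "(\<lambda>f. (sig l1 l2 * c3) * rho_dist \<mu> ?u f) =
             (\<lambda>f. (c1 * c2 * tau (\<Phi> l1) (\<Phi> l2)) * rho_dist \<nu> ?u f)"
      using A B by (simp add: mult.assoc)
    have "rho_dist (- \<nu>) (\<lambda>f. (sig l1 l2 * c3) * rho_dist \<mu> ?u f) =
          rho_dist (- \<nu>) (\<lambda>f. (c1 * c2 * tau (\<Phi> l1) (\<Phi> l2)) * rho_dist \<nu> ?u f)"
      using E by simp
    then have "(\<lambda>f. (sig l1 l2 * c3) * (tau (- \<nu>) \<mu> * rho_dist (- \<nu> + \<mu>) ?u f)) =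
               (\<lambda>f. (c1 * c2 * tau (\<Phi> l1) (\<Phi> l2)) * (tau (- \<nu>) \<nu> * rho_dist (- \<nu> + \<nu>) ?u f))"
      by (simp only: rho_dist_scal rho_dist_rho_dist[OF u])
    moreover have h1: "- \<nu> + \<mu> = \<mu> - \<nu>" by simp
    moreover have h2: "- \<nu> + \<nu> = 0" by simp
    ultimately have "(sig l1 l2 * c3) * (tau (- \<nu>) \<mu> * rho_dist (\<mu> - \<nu>) ?u f) =
               (c1 * c2 * tau (\<Phi> l1) (\<Phi> l2)) * (tau (- \<nu>) \<nu> * rho_dist 0 ?u f)"
      by (metis (no_types, lifting))
    then show ?thesis by (simp add: rho_dist_zero[OF u] \<alpha>_def \<beta>_def mult.assoc)
  qed
  have \<alpha>nz: "\<alpha> \<noteq> 0"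
  proof
    assume "\<alpha> = 0"
    then have "\<beta> * T F0 f = 0" for f using key[OF F0(1)] by simp
    then have "T F0 = (\<lambda>f. 0)" using \<beta>nz by auto
    then show False using F0 by simp
  qed
  show ?thesis
  proof (intro exI ballI ext)
    fix F :: "'a \<Rightarrow> complex" and f :: "'a \<Rightarrow> complex" assume F: "F \<in> schwartz"
    show "rho_dist (\<Phi> (l1 + l2) - (\<Phi> l1 + \<Phi> l2)) (T F) f = \<beta> / \<alpha> * T F f"
      using key[OF F, of f] \<alpha>nz unfolding \<mu>_def \<nu>_def by (simp add: field_simps)
  qed
qed

lemma dense_rel:
  assumes wd: "weak_star_dense A" and rel: "\<forall>v\<in>A. rho_dist \<delta> v = (\<lambda>f. k * v f)"
    and u: "u \<in> tempered" and f: "f \<in> schwartz"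
  shows "u (rho (neg \<delta>) f) = k * u f"
proof -
  let ?g = "rho (neg \<delta>) f"
  have g: "?g \<in> schwartz" using schwartz_rho[OF f] .
  have "cmod (u ?g - k * u f) \<le> 0 + e" if e: "e > 0" for e
  proof -
    define e' where "e' = e / (1 + cmod k)"
    have e': "e' > 0" using e by (simp add: e'_def add_pos_nonneg)
    have W: "\<forall>u\<in>tempered. \<forall>fs. finite fs \<longrightarrow> fs \<subseteq> schwartz \<longrightarrow> (\<forall>e>0.
        \<exists>v\<in>A. \<forall>f\<in>fs. cmod (u f - v f) < e)" using wd unfolding weak_star_dense_def by blast
    have fin: "finite {f, ?g}" and sub: "{f, ?g} \<subseteq> schwartz" using f g by auto
    obtain v where v: "v \<in> A" and vf: "\<forall>h\<in>{f, ?g}. cmod (u h - v h) < e'"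
      using W u fin sub e' by blast
    have "rho_dist \<delta> v f = k * v f" using rel v by simp
    then have vg: "v ?g = k * v f" using f by (simp add: rho_dist_eq)
    have eq: "u ?g - k * u f = (u ?g - v ?g) + k * (v f - u f)" using vg by (simp add: algebra_simps)
    have "cmod (u ?g - k * u f) \<le> cmod (u ?g - v ?g) + cmod (k * (v f - u f))"
      unfolding eq by (rule norm_triangle_ineq)
    also have "\<dots> = cmod (u ?g - v ?g) + cmod k * cmod (v f - u f)" by (simp add: norm_mult)
    also have "\<dots> \<le> e' + cmod k * e'"
      using vf by (intro add_mono mult_left_mono) (auto simp: norm_minus_commute less_imp_le)
    also have "\<dots> = e' * (1 + cmod k)" by (simp add: algebra_simps)
    also have "\<dots> = e" unfolding e'_def using add_pos_nonneg[of 1 "cmod k"] by simp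
    finally show ?thesis by simp
  qed
  then have "cmod (u ?g - k * u f) \<le> 0" by (rule field_le_epsilon)
  then show ?thesis by simp
qed

lemma K2:
  fixes \<delta> :: "'a::euclidean_space \<times> 'a" and F0 :: "'a \<Rightarrow> complex"
  assumes wd: "weak_star_dense A" and rel: "\<forall>v\<in>A. rho_dist \<delta> v = (\<lambda>f. k * v f)"
    and F0: "F0 \<in> schwartz" and y0: "F0 y0 \<noteq> 0"
  shows "\<delta> = 0"
proof -
  obtain x w where \<delta>: "\<delta> = (x, w)" by (cases \<delta>)
  have pw: "e1 (w \<bullet> (y + (1/2) *\<^sub>R x)) * f (y + x) = k * f y" if f: "f \<in> schwartz" for f y
  proof -
    have "(\<lambda>f. if f \<in> schwartz then f y else 0) (rho (neg \<delta>) f) = k * (\<lambda>f. if f \<in> schwartz then f y else 0) f"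
      by (rule dense_rel[OF wd rel delta_tempered f])
    then have "rho (neg \<delta>) f y = k * f y" using f schwartz_rho[OF f, of "neg \<delta>"] by simp
    then show ?thesis by (simp add: rho_eq neg_def \<delta>)
  qed
  have pwn: "cmod (f (y + x)) = cmod k * cmod (f y)" if f: "f \<in> schwartz" for f y
    using arg_cong[OF pw[OF f, of y], of cmod] by (simp add: norm_mult e1_def)
  have x0: "x = 0"
  proof (rule ccontr)
    assume x: "x \<noteq> 0"
    show False
    proof (cases "cmod k \<ge> 1")
      case True
      have "\<forall>n::nat. cmod (F0 y0) \<le> cmod (F0 (y0 + real n *\<^sub>R x))"
      proof
        fix n :: nat show "cmod (F0 y0) \<le> cmod (F0 (y0 + real n *\<^sub>R x))"
        proof (induction n)
          case 0 then show ?case by simp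
        next
          case (Suc n)
          have "cmod (F0 (y0 + real (Suc n) *\<^sub>R x)) = cmod k * cmod (F0 (y0 + real n *\<^sub>R x))"
            using pwn[OF F0, of "y0 + real n *\<^sub>R x"] by (simp add: algebra_simps)
          also have "\<dots> \<ge> cmod (F0 (y0 + real n *\<^sub>R x))"
            using mult_right_mono[OF True norm_ge_zero[of "F0 (y0 + real n *\<^sub>R x)"]] by simp
          finally show ?case using Suc by simp
        qed
      qed
      then show False using decay_contra[OF F0 y0 x] by blast
    next
      case False
      have "\<forall>n::nat. cmod (F0 y0) \<le> cmod (F0 (y0 + real n *\<^sub>R (- x)))"
      proof
        fix n :: nat show "cmod (F0 y0) \<le> cmod (F0 (y0 + real n *\<^sub>R (- x)))"
        proof (induction n)
          case 0 then show ?case by simp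
        next
          case (Suc n)
          have "cmod (F0 (y0 + real n *\<^sub>R (- x))) = cmod k * cmod (F0 (y0 + real (Suc n) *\<^sub>R (- x)))"
            using pwn[OF F0, of "y0 + real (Suc n) *\<^sub>R (- x)"] by (simp add: algebra_simps)
          also have "\<dots> \<le> cmod (F0 (y0 + real (Suc n) *\<^sub>R (- x)))"
            using mult_right_mono[of "cmod k" 1 "cmod (F0 (y0 + real (Suc n) *\<^sub>R (- x)))"] False by simp
          finally show ?case using Suc by simp
        qed
      qed
      then show False using decay_contra[OF F0 y0] x by (metis neg_equal_0_iff_equal)
    qed
  qed
  have pw0: "e1 (w \<bullet> y) * f y = k * f y" if f: "f \<in> schwartz" for f y
    using pw[OF f, of y] x0 by simp
  have eb: "e1 (w \<bullet> b) = 1" for b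
  proof -
    have "e1 (w \<bullet> (y0 + b)) * F0 y0 = k * F0 y0"
      using pw0[OF schwartz_transl[OF F0, of b], of "y0 + b"] by (simp add: transl_def)
    moreover have "e1 (w \<bullet> y0) * F0 y0 = k * F0 y0" using pw0[OF F0] .
    ultimately have "e1 (w \<bullet> (y0 + b)) = e1 (w \<bullet> y0)" using y0 by simp
    then show ?thesis by (simp add: inner_add_right e1_add)
  qed
  have w0: "w = 0"
  proof (rule ccontr)
    assume w: "w \<noteq> 0"
    let ?b = "(1 / (2 * (w \<bullet> w))) *\<^sub>R w"
    have "w \<bullet> w \<noteq> 0" using w by simp
    then have "w \<bullet> ?b = 1/2" by (simp add: inner_scaleR_right)
    have "e1 (w \<bullet> ?b) = -1" unfolding \<open>w \<bullet> ?b = 1/2\<close> by (rule e1_half)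
    then show False using eb[of ?b] by simp
  qed
  show ?thesis using x0 w0 \<delta> by (simp add: zero_prod_def)
qed

inductive_set polys :: "('a::euclidean_space \<Rightarrow> complex) set" where
  pconst: "(\<lambda>y. c) \<in> polys"
| plin: "(\<lambda>y. of_real (v \<bullet> y)) \<in> polys"
| pquad: "(\<lambda>y. of_real (y \<bullet> y)) \<in> polys"
| padd: "p \<in> polys \<Longrightarrow> q \<in> polys \<Longrightarrow> (\<lambda>y. p y + q y) \<in> polys"
| pmul: "p \<in> polys \<Longrightarrow> q \<in> polys \<Longrightarrow> (\<lambda>y. p y * q y) \<in> polys"

lemma polys_deriv:
  assumes "p \<in> polys"
  shows "\<exists>D. (\<forall>x. (p has_derivative D x) (at x)) \<and> (\<forall>v. (\<lambda>x. D x v) \<in> polys)"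
  using assms
proof (induction rule: polys.induct)
  case (pconst c)
  show ?case by (rule exI[of _ "\<lambda>x h. 0"]) (auto intro: polys.pconst)
next
  case (plin w)
  have "((\<lambda>y. of_real (w \<bullet> y)) has_derivative (\<lambda>h. of_real (w \<bullet> h))) (at x)" for x :: 'a
    by (intro derivative_eq_intros) auto
  then show ?case by (intro exI[of _ "\<lambda>x h. of_real (w \<bullet> h)"]) (auto intro: polys.pconst)
next
  case pquad
  have "((\<lambda>y. of_real (y \<bullet> y)) has_derivative (\<lambda>h. of_real (h \<bullet> x + x \<bullet> h))) (at x)" for x :: 'a
    by (intro derivative_eq_intros) auto
  moreover have "(\<lambda>x. of_real (v \<bullet> x + x \<bullet> v)) \<in> polys" for v :: 'a
  proof -
    have "(\<lambda>x. of_real (v \<bullet> x) + of_real (v \<bullet> x)) \<in> (polys :: ('a \<Rightarrow> complex) set)"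
      by (intro polys.padd polys.plin)
    moreover have "(\<lambda>x. of_real (v \<bullet> x + x \<bullet> v)) = (\<lambda>x. of_real (v \<bullet> x) + (of_real (v \<bullet> x) :: complex))"
      by (simp add: inner_commute)
    ultimately show ?thesis by simp
  qed
  ultimately show ?case by (intro exI[of _ "\<lambda>x h. of_real (h \<bullet> x + x \<bullet> h)"]) auto
next
  case (padd p q)
  then obtain Dp Dq where Dp: "\<forall>x. (p has_derivative Dp x) (at x)" "\<forall>v. (\<lambda>x. Dp x v) \<in> polys"
    and Dq: "\<forall>x. (q has_derivative Dq x) (at x)" "\<forall>v. (\<lambda>x. Dq x v) \<in> polys" by blast
  show ?case
  proof (intro exI conjI allI)
    fix x show "((\<lambda>y. p y + q y) has_derivative (\<lambda>h. Dp x h + Dq x h)) (at x)"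
      using Dp Dq by (intro has_derivative_add) auto
  next
    fix v show "(\<lambda>x. Dp x v + Dq x v) \<in> polys" using Dp Dq by (intro polys.padd) auto
  qed
next
  case (pmul p q)
  then obtain Dp Dq where Dp: "\<forall>x. (p has_derivative Dp x) (at x)" "\<forall>v. (\<lambda>x. Dp x v) \<in> polys"
    and Dq: "\<forall>x. (q has_derivative Dq x) (at x)" "\<forall>v. (\<lambda>x. Dq x v) \<in> polys" by blast
  show ?case
  proof (intro exI conjI allI)
    fix x show "((\<lambda>y. p y * q y) has_derivative (\<lambda>h. p x * Dq x h + Dp x h * q x)) (at x)"
      using Dp Dq by (intro has_derivative_mult) auto
  next
    fix v show "(\<lambda>x. p x * Dq x v + Dp x v * q x) \<in> polys"
      using Dp Dq pmul.hyps by (intro polys.padd polys.pmul polys.pconst) auto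
  qed
qed

lemma one_plus_pow_mono:
  fixes t :: real assumes "0 \<le> t" "m \<le> n"
  shows "(1 + t) ^ m \<le> (1 + t) ^ n"
  using assms by (intro power_increasing) auto

lemma polys_bound:
  assumes "p \<in> polys"
  shows "\<exists>C m. 0 \<le> C \<and> (\<forall>y. cmod (p y) \<le> C * (1 + norm y) ^ m)"
  using assms
proof (induction rule: polys.induct)
  case (pconst c)
  show ?case by (rule exI[of _ "cmod c"], rule exI[of _ 0]) auto
next
  case (plin v)
  have "cmod (of_real (v \<bullet> y)) \<le> norm v * (1 + norm y) ^ 1" for y :: 'a
  proof -
    have "cmod (of_real (v \<bullet> y)) = \<bar>v \<bullet> y\<bar>" by simp
    also have "\<dots> \<le> norm v * norm y" by (rule Cauchy_Schwarz_ineq2)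
    also have "\<dots> \<le> norm v * (1 + norm y)" by (intro mult_left_mono) auto
    finally show ?thesis by simp
  qed
  then show ?case by (intro exI[of _ "norm v"] exI[of _ 1]) auto
next
  case pquad
  have "cmod (of_real (y \<bullet> y)) \<le> 1 * (1 + norm y) ^ 2" for y :: 'a
  proof -
    have "cmod (of_real (y \<bullet> y)) = norm y ^ 2" by (simp add: power2_norm_eq_inner)
    also have "\<dots> \<le> (1 + norm y) ^ 2" by (intro power_mono) auto
    finally show ?thesis by simp
  qed
  then show ?case by (intro exI[of _ 1] exI[of _ 2]) auto
next
  case (padd p q)
  then obtain C1 m1 C2 m2 where C1: "0 \<le> C1" "\<forall>y. cmod (p y) \<le> C1 * (1 + norm y) ^ m1"
    and C2: "0 \<le> C2" "\<forall>y. cmod (q y) \<le> C2 * (1 + norm y) ^ m2" by blast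
  have "cmod (p y + q y) \<le> (C1 + C2) * (1 + norm y) ^ (m1 + m2)" for y
  proof -
    have "cmod (p y + q y) \<le> cmod (p y) + cmod (q y)" by (rule norm_triangle_ineq)
    also have "\<dots> \<le> C1 * (1 + norm y) ^ m1 + C2 * (1 + norm y) ^ m2" using C1 C2 by (intro add_mono) auto
    also have "\<dots> \<le> C1 * (1 + norm y) ^ (m1 + m2) + C2 * (1 + norm y) ^ (m1 + m2)"
      using C1 C2 by (intro add_mono mult_left_mono one_plus_pow_mono) auto
    finally show ?thesis by (simp add: algebra_simps)
  qed
  then show ?case using C1 C2 by (intro exI[of _ "C1 + C2"] exI[of _ "m1 + m2"]) auto
next
  case (pmul p q)
  then obtain C1 m1 C2 m2 where C1: "0 \<le> C1" "\<forall>y. cmod (p y) \<le> C1 * (1 + norm y) ^ m1"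
    and C2: "0 \<le> C2" "\<forall>y. cmod (q y) \<le> C2 * (1 + norm y) ^ m2" by blast
  have "cmod (p y * q y) \<le> (C1 * C2) * (1 + norm y) ^ (m1 + m2)" for y
  proof -
    have "cmod (p y * q y) = cmod (p y) * cmod (q y)" by (simp add: norm_mult)
    also have "\<dots> \<le> (C1 * (1 + norm y) ^ m1) * (C2 * (1 + norm y) ^ m2)"
      using C1 C2 by (intro mult_mono) auto
    finally show ?thesis by (simp add: algebra_simps power_add)
  qed
  then show ?case using C1 C2 by (intro exI[of _ "C1 * C2"] exI[of _ "m1 + m2"]) auto
qed

lemma polys_sum:
  assumes "finite I" "\<And>i. i \<in> I \<Longrightarrow> f i \<in> polys"
  shows "(\<lambda>y. \<Sum>i\<in>I. f i y) \<in> polys"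
  using assms
proof (induction I rule: finite_induct)
  case empty then show ?case using polys.pconst[of 0] by simp
next
  case (insert i I)
  then have "(\<lambda>y. f i y + (\<Sum>i\<in>I. f i y)) \<in> polys" by (intro polys.padd) auto
  then show ?case using insert by simp
qed

lemma polys_pow:
  assumes "p \<in> polys"
  shows "(\<lambda>y. p y ^ n) \<in> polys"
proof (induction n)
  case 0 then show ?case using polys.pconst[of 1] by simp
next
  case (Suc n)
  then have "(\<lambda>y. p y * p y ^ n) \<in> polys" by (intro polys.pmul assms)
  then show ?case by simp
qed

lemma gauss_poly_bound:
  fixes B :: real assumes B: "B > 0"
  shows "\<exists>K. \<forall>t\<ge>0. (1 + t) ^ n * exp (- B * t ^ 2) \<le> K"
proof -
  define N where "N = Suc n"
  define \<alpha> where "\<alpha> = B / real N"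
  have \<alpha>: "\<alpha> > 0" using B by (simp add: \<alpha>_def N_def)
  define c where "c = 2 * max 1 (1 / \<alpha>)"
  have c: "c > 0" by (simp add: c_def)
  have "(1 + t) ^ n * exp (- B * t ^ 2) \<le> c ^ N" if t: "t \<ge> 0" for t
  proof -
    have t1: "1 + t \<le> 2 * (1 + t ^ 2)"
    proof -
      have "0 \<le> (t - 1/2) ^ 2" by simp
      then have "0 \<le> t * t - t + 1/4" by (simp add: power2_eq_square algebra_simps)
      then have "t \<le> 1 + t ^ 2" by (simp add: power2_eq_square)
      moreover have "2 * (1 + t ^ 2) = 2 + 2 * t ^ 2" by simp
      ultimately show ?thesis using zero_le_power2[of t] by linarith
    qed
    have t2: "1 + t ^ 2 \<le> max 1 (1 / \<alpha>) * (1 + \<alpha> * t ^ 2)"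
    proof (cases "\<alpha> \<ge> 1")
      case True
      then have le1: "1 + t ^ 2 \<le> 1 + \<alpha> * t ^ 2" by (simp add: mult_le_cancel_right1)
      have nn: "0 \<le> 1 + \<alpha> * t ^ 2" using \<alpha> by (simp add: add_nonneg_nonneg)
      have "1 + \<alpha> * t ^ 2 \<le> max 1 (1 / \<alpha>) * (1 + \<alpha> * t ^ 2)"
        using mult_right_mono[OF _ nn, of 1 "max 1 (1 / \<alpha>)"] by simp
      then show ?thesis using le1 by linarith
    next
      case False
      then have "max 1 (1 / \<alpha>) = 1 / \<alpha>" using \<alpha> by (simp add: max_def field_simps)
      moreover have "1 / \<alpha> * (1 + \<alpha> * t ^ 2) = 1 / \<alpha> + t ^ 2" using \<alpha> by (simp add: field_simps)
      moreover have "1 \<le> 1 / \<alpha>" using False \<alpha> by (simp add: field_simps)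
      ultimately show ?thesis by simp
    qed
    have "2 * (1 + t ^ 2) \<le> 2 * (max 1 (1 / \<alpha>) * (1 + \<alpha> * t ^ 2))"
      using t2 by simp
    moreover have "c * (1 + \<alpha> * t ^ 2) = 2 * (max 1 (1 / \<alpha>) * (1 + \<alpha> * t ^ 2))"
      by (simp add: c_def mult.assoc)
    ultimately have tt: "1 + t \<le> c * (1 + \<alpha> * t ^ 2)" using t1 by linarith
    have "(1 + t) ^ n \<le> (1 + t) ^ N" using t by (intro one_plus_pow_mono) (auto simp: N_def)
    also have "\<dots> \<le> (c * (1 + \<alpha> * t ^ 2)) ^ N" using t tt by (intro power_mono) auto
    also have "\<dots> = c ^ N * (1 + \<alpha> * t ^ 2) ^ N" by (simp add: power_mult_distrib)
    also have "\<dots> \<le> c ^ N * exp (\<alpha> * t ^ 2) ^ N"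
      using c \<alpha> t by (intro mult_left_mono power_mono) auto
    also have "exp (\<alpha> * t ^ 2) ^ N = exp (B * t ^ 2)"
      using exp_of_nat_mult[of N "\<alpha> * t ^ 2", symmetric] by (simp add: \<alpha>_def N_def)
    finally have "(1 + t) ^ n \<le> c ^ N * exp (B * t ^ 2)" .
    then have "(1 + t) ^ n * exp (- B * t ^ 2) \<le> c ^ N * exp (B * t ^ 2) * exp (- B * t ^ 2)"
      by (intro mult_right_mono) auto
    also have "\<dots> = c ^ N" by (simp add: mult.assoc exp_add[symmetric])
    finally show ?thesis .
  qed
  then show ?thesis by blast
qed

definition gclass :: "('a::euclidean_space \<Rightarrow> complex) \<Rightarrow> ('a \<Rightarrow> complex) set" where
  "gclass q = {f. \<exists>p\<in>polys. f = (\<lambda>y. p y * exp (q y))}"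

lemma gclass_deriv:
  assumes q: "q \<in> polys" and f: "f \<in> gclass q"
  shows "(\<forall>x. f differentiable at x) \<and> (\<forall>v. dirderiv v f \<in> gclass q)"
proof -
  obtain p where p: "p \<in> polys" and fp: "f = (\<lambda>y. p y * exp (q y))" using f unfolding gclass_def by blast
  obtain Dp where Dp: "\<forall>x. (p has_derivative Dp x) (at x)" "\<forall>v. (\<lambda>x. Dp x v) \<in> polys"
    using polys_deriv[OF p] by blast
  obtain Dq where Dq: "\<forall>x. (q has_derivative Dq x) (at x)" "\<forall>v. (\<lambda>x. Dq x v) \<in> polys"
    using polys_deriv[OF q] by blast
  have hd: "(f has_derivative (\<lambda>h. (Dp x h + p x * Dq x h) * exp (q x))) (at x)" for x
  proof -
    have e: "((\<lambda>y. exp (q y)) has_derivative (\<lambda>h. exp (q x) * Dq x h)) (at x)"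
      by (rule has_derivative_compose[OF Dq(1)[rule_format], of exp "\<lambda>h. exp (q x) * h"])
        (simp add: has_field_derivative_def[symmetric] DERIV_exp)
    show ?thesis unfolding fp
      by (rule has_derivative_eq_rhs[OF has_derivative_mult[OF Dp(1)[rule_format] e]])
        (auto simp: fun_eq_iff algebra_simps)
  qed
  have D1: "dirderiv v f = (\<lambda>y. (Dp y v + p y * Dq y v) * exp (q y))" for v
    using dirderiv_eq[OF hd] by (simp add: fun_eq_iff)
  have P1: "(\<lambda>y. Dp y v + p y * Dq y v) \<in> polys" for v
    using Dp Dq p by (intro polys.padd polys.pmul) auto
  have "dirderiv v f \<in> gclass q" for v
    unfolding gclass_def D1 by (intro CollectI bexI[OF _ P1[of v]]) simp
  then have "\<forall>v. dirderiv v f \<in> gclass q" by blast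
  moreover have "\<forall>x. f differentiable at x" using hd unfolding differentiable_def by blast
  ultimately show ?thesis by blast
qed

lemma gclass_iter:
  assumes q: "q \<in> polys" and f: "f \<in> gclass q"
  shows "iter_pderiv vs f \<in> gclass q"
  by (induction vs) (use f gclass_deriv[OF q] in auto)

lemma gclass_schwartz:
  assumes q: "q \<in> polys" and A: "\<And>y. Re (q y) \<le> A - B * norm y ^ 2" and B: "B > 0"
    and f: "f \<in> gclass q"
  shows "f \<in> schwartz"
proof (rule schwartzI)
  fix vs :: "'a list" and x
  show "iter_pderiv vs f differentiable at x" using gclass_deriv[OF q gclass_iter[OF q f]] by blast
next
  fix vs :: "'a list" and k
  obtain p where p: "p \<in> polys" and fp: "iter_pderiv vs f = (\<lambda>y. p y * exp (q y))"
    using gclass_iter[OF q f, of vs] unfolding gclass_def by blast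
  obtain C m where C: "0 \<le> C" "\<forall>y. cmod (p y) \<le> C * (1 + norm y) ^ m" using polys_bound[OF p] by blast
  obtain K where K: "\<forall>t\<ge>0. (1 + t) ^ (k + m) * exp (- B * t ^ 2) \<le> K" using gauss_poly_bound[OF B] by blast
  show "\<exists>Bd. \<forall>x. (1 + norm x) ^ k * cmod (iter_pderiv vs f x) \<le> Bd"
  proof (intro exI allI)
    fix y :: 'a
    have "(1 + norm y) ^ k * cmod (iter_pderiv vs f y) = (1 + norm y) ^ k * (cmod (p y) * exp (Re (q y)))"
      by (simp add: fp norm_mult)
    also have "\<dots> \<le> (1 + norm y) ^ k * ((C * (1 + norm y) ^ m) * exp (A - B * norm y ^ 2))"
      using C A by (intro mult_left_mono mult_mono) auto
    also have "\<dots> = C * exp A * ((1 + norm y) ^ (k + m) * exp (- B * norm y ^ 2))"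
      by (simp add: power_add exp_diff exp_minus field_simps)
    also have "\<dots> \<le> C * exp A * K" using K C by (intro mult_left_mono) auto
    finally show "(1 + norm y) ^ k * cmod (iter_pderiv vs f y) \<le> C * exp A * K" .
  qed
qed

lemma exp_poly_schwartz:
  assumes q: "q \<in> polys" and A: "\<And>y. Re (q y) \<le> A - B * norm y ^ 2" and B: "B > 0"
  shows "(\<lambda>y. exp (q y)) \<in> schwartz"
proof -
  have "(\<lambda>y. 1 * exp (q y)) \<in> gclass q" unfolding gclass_def
    by (intro CollectI bexI[of _ "\<lambda>y. 1"] polys.pconst) simp
  then show ?thesis using gclass_schwartz[OF q A B] by simp
qed

definition zc :: "'a::euclidean_space \<Rightarrow> 'a \<Rightarrow> 'a \<Rightarrow> 'a \<Rightarrow> real" where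
  "zc a c b y = (2 * (y \<bullet> b) - (a \<bullet> b + c \<bullet> b)) / (c \<bullet> b - a \<bullet> b)"

definition psi :: "'a::euclidean_space \<Rightarrow> 'a \<Rightarrow> nat \<Rightarrow> 'a \<Rightarrow> real" where
  "psi a c n y = exp (- (\<Sum>b\<in>Basis. zc a c b y ^ (2 * n)) - y \<bullet> y)"

definition G0r :: "'a::euclidean_space \<Rightarrow> real" where
  "G0r y = exp (- (y \<bullet> y))"

lemma zc_polys: "(\<lambda>y. complex_of_real (zc a c b y)) \<in> polys"
proof -
  have "(\<lambda>y. complex_of_real (2 / (c \<bullet> b - a \<bullet> b)) * of_real (b \<bullet> y) +
           of_real (- (a \<bullet> b + c \<bullet> b) / (c \<bullet> b - a \<bullet> b))) \<in> polys"
    by (intro polys.padd polys.pmul polys.pconst polys.plin)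
  moreover have "(\<lambda>y. complex_of_real (zc a c b y)) = (\<lambda>y. complex_of_real (2 / (c \<bullet> b - a \<bullet> b)) * of_real (b \<bullet> y) +
           of_real (- (a \<bullet> b + c \<bullet> b) / (c \<bullet> b - a \<bullet> b)))"
  proof (rule ext)
    fix y
    have "zc a c b y = 2 / (c \<bullet> b - a \<bullet> b) * (b \<bullet> y) + (- (a \<bullet> b + c \<bullet> b) / (c \<bullet> b - a \<bullet> b))"
      unfolding zc_def by (simp add: diff_divide_distrib add_divide_distrib inner_commute)
    then show "complex_of_real (zc a c b y) = complex_of_real (2 / (c \<bullet> b - a \<bullet> b)) * of_real (b \<bullet> y) +
           of_real (- (a \<bullet> b + c \<bullet> b) / (c \<bullet> b - a \<bullet> b))"
      by (simp only: of_real_add of_real_mult)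
  qed
  ultimately show ?thesis by simp
qed

lemma psi_schwartz: "(\<lambda>y. complex_of_real (psi a c n y)) \<in> schwartz"
proof -
  define q where "q = (\<lambda>y::'a. complex_of_real (- (\<Sum>b\<in>Basis. zc a c b y ^ (2 * n)) - y \<bullet> y))"
  have "(\<lambda>y. (-1) * (\<Sum>b\<in>Basis. (complex_of_real (zc a c b y)) ^ (2 * n)) + (-1) * of_real (y \<bullet> y)) \<in> polys"
    by (intro polys.padd polys.pmul polys.pconst polys.pquad polys_sum polys_pow zc_polys) auto
  moreover have "q = (\<lambda>y. (-1) * (\<Sum>b\<in>Basis. (complex_of_real (zc a c b y)) ^ (2 * n)) + (-1) * of_real (y \<bullet> y))"
    unfolding q_def by (rule ext) simp
  ultimately have qp: "q \<in> polys" by simp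
  have qA: "Re (q y) \<le> 0 - 1 * norm y ^ 2" for y
  proof -
    have "0 \<le> (\<Sum>b\<in>Basis. zc a c b y ^ (2 * n))" by (intro sum_nonneg) (simp add: power_mult)
    then show ?thesis by (simp add: q_def power2_norm_eq_inner)
  qed
  have "(\<lambda>y. exp (q y)) \<in> schwartz" by (rule exp_poly_schwartz[OF qp qA]) simp
  moreover have "(\<lambda>y. exp (q y)) = (\<lambda>y. complex_of_real (psi a c n y))"
    unfolding q_def psi_def by (simp only: exp_of_real)
  ultimately show ?thesis by simp
qed

lemma G0_schwartz: "(\<lambda>y. complex_of_real (G0r y)) \<in> schwartz"
proof -
  define q where "q = (\<lambda>y::'a. (-1) * complex_of_real (y \<bullet> y))"
  have qp: "q \<in> polys" unfolding q_def by (intro polys.pmul polys.pconst polys.pquad)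
  have qA: "Re (q y) \<le> 0 - 1 * norm y ^ 2" for y by (simp add: q_def power2_norm_eq_inner)
  have "(\<lambda>y. exp (q y)) \<in> schwartz" by (rule exp_poly_schwartz[OF qp qA]) simp
  moreover have "(\<lambda>y. exp (q y)) = (\<lambda>y. complex_of_real (G0r y))"
    by (rule ext) (simp add: q_def G0r_def exp_of_real flip: of_real_minus)
  ultimately show ?thesis by simp
qed

lemma psi_pos: "0 < psi a c n y" by (simp add: psi_def)
lemma G0r_pos: "0 < G0r y" by (simp add: G0r_def)

lemma psi_le: "psi a c n y \<le> G0r y"
proof -
  have "0 \<le> (\<Sum>b\<in>Basis. zc a c b y ^ (2 * n))" by (intro sum_nonneg) (simp add: power_mult)
  then show ?thesis by (simp add: psi_def G0r_def)
qed

lemma zc_in: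
  assumes "a \<bullet> b < y \<bullet> b" "y \<bullet> b < c \<bullet> b"
  shows "\<bar>zc a c b y\<bar> < 1"
proof -
  have r: "c \<bullet> b - a \<bullet> b > 0" using assms by simp
  have "2 * (y \<bullet> b) - (a \<bullet> b + c \<bullet> b) < c \<bullet> b - a \<bullet> b" using assms by simp
  moreover have "-(c \<bullet> b - a \<bullet> b) < 2 * (y \<bullet> b) - (a \<bullet> b + c \<bullet> b)" using assms by simp
  ultimately show ?thesis using r unfolding zc_def by (simp add: abs_less_iff divide_less_eq less_divide_eq)
qed

lemma zc_out:
  assumes "a \<bullet> b < c \<bullet> b" "y \<bullet> b < a \<bullet> b \<or> c \<bullet> b < y \<bullet> b"
  shows "\<bar>zc a c b y\<bar> > 1"
proof -
  have r: "c \<bullet> b - a \<bullet> b > 0" using assms by simp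
  show ?thesis
  proof (cases "y \<bullet> b < a \<bullet> b")
    case True
    then have "2 * (y \<bullet> b) - (a \<bullet> b + c \<bullet> b) < -(c \<bullet> b - a \<bullet> b)" by simp
    then have "zc a c b y < -1" using r unfolding zc_def by (simp add: divide_less_eq)
    then show ?thesis by simp
  next
    case False
    then have "c \<bullet> b < y \<bullet> b" using assms by simp
    then have "c \<bullet> b - a \<bullet> b < 2 * (y \<bullet> b) - (a \<bullet> b + c \<bullet> b)" using assms by simp
    then have "zc a c b y > 1" using r unfolding zc_def by (simp add: less_divide_eq)
    then show ?thesis by simp
  qed
qed

lemma psi_lim_in:
  assumes y: "y \<in> box a c"
  shows "(\<lambda>n. psi a c n y) \<longlonglongrightarrow> G0r y"
proof -
  have "(\<lambda>n. zc a c b y ^ (2 * n)) \<longlonglongrightarrow> 0" if b: "b \<in> Basis" for b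
  proof -
    have "\<bar>zc a c b y\<bar> < 1" using y b by (intro zc_in) (auto simp: mem_box)
    then have "norm ((zc a c b y)\<^sup>2) < 1"
      by (simp add: abs_square_less_1)
    then have "(\<lambda>n. ((zc a c b y)\<^sup>2) ^ n) \<longlonglongrightarrow> 0" by (rule LIMSEQ_power_zero)
    then show ?thesis by (simp add: power_mult)
  qed
  then have "(\<lambda>n. \<Sum>b\<in>Basis. zc a c b y ^ (2 * n)) \<longlonglongrightarrow> (\<Sum>b\<in>(Basis::'a set). 0)"
    by (intro tendsto_sum) auto
  then have "(\<lambda>n. exp (- (\<Sum>b\<in>Basis. zc a c b y ^ (2 * n)) - y \<bullet> y)) \<longlonglongrightarrow> exp (- 0 - y \<bullet> y)"
    by (intro tendsto_intros) auto
  then show ?thesis by (simp add: psi_def G0r_def)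
qed

lemma psi_lim_out:
  assumes ac: "\<forall>b\<in>Basis. a \<bullet> b < c \<bullet> b" and y: "y \<notin> cbox a c"
  shows "(\<lambda>n. psi a c n y) \<longlonglongrightarrow> 0"
proof -
  obtain b where b: "b \<in> Basis" "y \<bullet> b < a \<bullet> b \<or> c \<bullet> b < y \<bullet> b"
    using y by (auto simp: mem_box not_le)
  define r where "r = (zc a c b y)\<^sup>2"
  have z1: "\<bar>zc a c b y\<bar> > 1" using ac b by (intro zc_out) auto
  have r1: "r > 1" using z1 unfolding r_def by (metis abs_le_square_iff abs_one linorder_not_le one_power2)
  have le: "psi a c n y \<le> (1 / r) ^ n" for n
  proof -
    have nn: "\<And>b. 0 \<le> zc a c b y ^ (2 * n)" by (simp add: power_mult)
    have "zc a c b y ^ (2 * n) \<le> (\<Sum>b\<in>Basis. zc a c b y ^ (2 * n))"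
      using b(1) nn by (intro member_le_sum) auto
    moreover have "0 \<le> y \<bullet> y" by simp
    moreover have "r ^ n = zc a c b y ^ (2 * n)" by (simp add: r_def power_mult)
    ultimately have "- (\<Sum>b\<in>Basis. zc a c b y ^ (2 * n)) - y \<bullet> y \<le> - (r ^ n)"
      by linarith
    then have "psi a c n y \<le> exp (- (r ^ n))"
      unfolding psi_def by simp
    also have "\<dots> \<le> 1 / r ^ n"
    proof -
      have rp: "r ^ n > 0" using r1 by simp
      have "r ^ n \<le> exp (r ^ n)" using exp_ge_add_one_self[of "r ^ n"] by linarith
      then show ?thesis using rp by (simp add: exp_minus field_simps)
    qed
    also have "\<dots> = (1 / r) ^ n" by (simp add: power_one_over)
    finally show ?thesis .
  qed
  have L: "(\<lambda>n. (1 / r) ^ n) \<longlonglongrightarrow> 0" using r1 by (intro LIMSEQ_power_zero) simp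
  show ?thesis
  proof (rule tendsto_sandwich[of "\<lambda>n. 0" "\<lambda>n. psi a c n y" sequentially "\<lambda>n. (1 / r) ^ n"])
    show "\<forall>\<^sub>F n in sequentially. 0 \<le> psi a c n y" using psi_pos less_imp_le by (intro always_eventually) blast
    show "\<forall>\<^sub>F n in sequentially. psi a c n y \<le> (1 / r) ^ n" using le by (intro always_eventually) blast
  qed (use L in auto)
qed

lemma cbox_diff_box_null: "cbox a c - box a c \<in> null_sets lborel"
proof (cases "\<forall>b\<in>Basis. a \<bullet> b \<le> c \<bullet> b")
  case True
  have "emeasure lborel (cbox a c - box a c) = emeasure lborel (cbox a c) - emeasure lborel (box a c)"
    by (rule emeasure_Diff) (auto simp: emeasure_lborel_box_eq box_subset_cbox)
  also have "\<dots> = 0" using True by (simp add: emeasure_lborel_box_eq emeasure_lborel_cbox_eq)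
  finally show ?thesis by auto
next
  case False
  then have "cbox a c = {}" by (auto simp: box_eq_empty not_le)
  then show ?thesis by simp
qed

lemma box_integral_zero:
  fixes h :: "'a::euclidean_space \<Rightarrow> complex"
  assumes hm: "h \<in> borel_measurable lborel"
    and hi: "\<And>f. f \<in> schwartz \<Longrightarrow> integrable lborel (\<lambda>x. h x * f x)"
    and h0: "\<And>f. f \<in> schwartz \<Longrightarrow> (\<integral>x. h x * f x \<partial>lborel) = 0"
  shows "(\<integral>y. h y * of_real (indicator (box a c) y * G0r y) \<partial>lborel) = 0"
proof (cases "\<forall>b\<in>Basis. a \<bullet> b < c \<bullet> b")
  case False
  then have "box a c = {}" by (auto simp: box_eq_empty not_less)
  then show ?thesis by simp
next
  case ac: True
  define s where "s n y = h y * of_real (psi a c n y)" for n y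
  define f where "f y = h y * of_real (indicator (box a c) y * G0r y)" for y
  define w where "w y = norm (h y * of_real (G0r y))" for y
  have [measurable]: "h \<in> borel_measurable borel" using hm by simp
  have [measurable]: "box a c \<in> sets borel" by simp
  have [measurable]: "(\<lambda>y. psi a c n y) \<in> borel_measurable lborel" for n
    unfolding psi_def zc_def by measurable
  have [measurable]: "G0r \<in> borel_measurable lborel" unfolding G0r_def by measurable
  have fm: "f \<in> borel_measurable lborel" unfolding f_def by measurable
  have sm: "s n \<in> borel_measurable lborel" for n unfolding s_def by measurable
  have wi: "integrable lborel w" unfolding w_def using hi[OF G0_schwartz] by (rule integrable_norm)
  have lim: "AE y in lborel. (\<lambda>n. s n y) \<longlonglongrightarrow> f y"
    using AE_not_in[OF cbox_diff_box_null[of a c]]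
  proof eventually_elim
    case (elim y)
    show ?case
    proof (cases "y \<in> box a c")
      case True
      have "(\<lambda>n. h y * of_real (psi a c n y)) \<longlonglongrightarrow> h y * of_real (G0r y)"
        by (intro tendsto_mult tendsto_const tendsto_of_real psi_lim_in True)
      then show ?thesis using True by (simp add: s_def f_def)
    next
      case False
      then have "y \<notin> cbox a c" using elim by auto
      then have "(\<lambda>n. h y * of_real (psi a c n y)) \<longlonglongrightarrow> h y * of_real 0"
        by (intro tendsto_mult tendsto_const tendsto_of_real psi_lim_out ac)
      then show ?thesis using False by (simp add: s_def f_def)
    qed
  qed
  have bound: "AE y in lborel. norm (s n y) \<le> w y" for n
  proof (intro AE_I2)
    fix y
    have "norm (s n y) = norm (h y) * psi a c n y" using psi_pos[of a c n y] by (simp add: s_def norm_mult)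
    also have "\<dots> \<le> norm (h y) * G0r y" by (intro mult_left_mono psi_le) auto
    also have "\<dots> = w y" using G0r_pos[of y] by (simp add: w_def norm_mult)
    finally show "norm (s n y) \<le> w y" .
  qed
  have "(\<lambda>n. integral\<^sup>L lborel (s n)) \<longlonglongrightarrow> integral\<^sup>L lborel f"
    by (rule integral_dominated_convergence[OF fm sm wi lim bound])
  moreover have "integral\<^sup>L lborel (s n) = 0" for n unfolding s_def by (rule h0[OF psi_schwartz])
  ultimately have "(\<lambda>n. 0) \<longlonglongrightarrow> integral\<^sup>L lborel f" by simp
  then have I0: "integral\<^sup>L lborel f = 0" by (simp add: LIMSEQ_const_iff)
  have fe: "f = (\<lambda>y. h y * of_real (indicator (box a c) y * G0r y))" by (simp add: fun_eq_iff f_def)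
  show ?thesis using I0 unfolding fe .
qed

lemma sets_borel_box:
  "sets (borel :: 'a::euclidean_space measure) = sigma_sets UNIV (range (\<lambda>(a, b). box a b))"
  by (subst borel_eq_box) (rule sets_measure_of, auto)

lemma FL:
  fixes h :: "'a::euclidean_space \<Rightarrow> complex"
  assumes hm: "h \<in> borel_measurable lborel"
    and hi: "\<And>f. f \<in> schwartz \<Longrightarrow> integrable lborel (\<lambda>x. h x * f x)"
    and h0: "\<And>f. f \<in> schwartz \<Longrightarrow> (\<integral>x. h x * f x \<partial>lborel) = 0"
  shows "AE x in lborel. h x = 0"
proof -
  define H where "H x = h x * of_real (G0r x)" for x
  have Hi: "integrable lborel H" unfolding H_def by (rule hi[OF G0_schwartz])
  have H0: "integral\<^sup>L lborel H = 0" unfolding H_def by (rule h0[OF G0_schwartz])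
  let ?E = "range (\<lambda>(a, b). box a b) :: 'a set set"
  have IS: "Int_stable ?E"
    unfolding Int_stable_def by (auto simp: box_Int_box)
  have all: "set_lebesgue_integral lborel A H = 0" if A: "A \<in> sets lborel" for A
  proof -
    have Asig: "A \<in> sigma_sets UNIV ?E" using A by (simp only: sets_lborel sets_borel_box)
    show ?thesis
    proof (rule sigma_sets_induct_disjoint[OF IS _ Asig])
      show "?E \<subseteq> Pow UNIV" by simp
    next
      fix B assume "B \<in> ?E"
      then obtain a c where B: "B = box a c" by auto
      have "(\<integral>y. h y * of_real (indicator (box a c) y * G0r y) \<partial>lborel) = 0"
        by (rule box_integral_zero[OF hm hi h0])
      then show "set_lebesgue_integral lborel B H = 0" unfolding B set_lebesgue_integral_def H_def
        by (simp add: scaleR_conv_of_real mult_ac)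
    next
      show "set_lebesgue_integral lborel {} H = 0" by (simp add: set_lebesgue_integral_def)
    next
      fix B assume B1: "B \<in> sigma_sets UNIV ?E" and B2: "set_lebesgue_integral lborel B H = 0"
      have Bs: "B \<in> sets lborel" using B1 by (simp only: sets_lborel sets_borel_box)
      have "set_lebesgue_integral lborel (UNIV - B) H =
          (\<integral>x. H x - indicator B x *\<^sub>R H x \<partial>lborel)"
        unfolding set_lebesgue_integral_def
        by (intro Bochner_Integration.integral_cong) (auto simp: indicator_def)
      also have "\<dots> = integral\<^sup>L lborel H - (\<integral>x. indicator B x *\<^sub>R H x \<partial>lborel)"
        by (intro Bochner_Integration.integral_diff Hi integrable_mult_indicator Bs)
      also have "\<dots> = 0" using H0 B2 by (simp add: set_lebesgue_integral_def)
      finally show "set_lebesgue_integral lborel (UNIV - B) H = 0" .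
    next
      fix B :: "nat \<Rightarrow> 'a set" assume B1: "disjoint_family B" and B2: "range B \<subseteq> sigma_sets UNIV ?E"
        and B3: "\<And>i. set_lebesgue_integral lborel (B i) H = 0"
      have Bs: "\<And>i. B i \<in> sets lborel" using B2 by (simp only: sets_lborel sets_borel_box) blast
      have disj: "\<And>i j. i \<noteq> j \<Longrightarrow> B i \<inter> B j = {}" using B1 unfolding disjoint_family_on_def by auto
      have Us: "(\<Union>i. B i) \<in> sets lborel" using Bs by auto
      have "set_integrable lborel (\<Union>i. B i) H"
        unfolding set_integrable_def by (rule integrable_mult_indicator[OF Us Hi])
      then have "set_lebesgue_integral lborel (\<Union>i. B i) H = (\<Sum>i. set_lebesgue_integral lborel (B i) H)"
        by (intro lebesgue_integral_countable_add Bs disj)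
      then show "set_lebesgue_integral lborel (\<Union>i. B i) H = 0" using B3 by simp
    qed
  qed
  have "AE x in lborel. H x = 0" by (rule sigma_finite_measure.density_zero[OF sigma_finite_lborel Hi all])
  then show ?thesis
  proof (rule AE_mp[OF _ AE_I2], intro impI)
    fix x assume "H x = 0"
    then show "h x = 0" using G0r_pos[of x] by (simp add: H_def)
  qed
qed

lemma plus_measurable[measurable]: "((+) (c::'a::euclidean_space)) \<in> measurable borel borel"
  by (intro borel_measurable_continuous_onI continuous_intros)

lemma shift_integrable:
  fixes F :: "'a::euclidean_space \<Rightarrow> 'b::{banach, second_countable_topology}"
  assumes [measurable]: "F \<in> borel_measurable borel"
  shows "integrable lborel (\<lambda>t. F (c + t)) \<longleftrightarrow> integrable lborel F"
proof -
  have "integrable (distr lborel borel ((+) c)) F \<longleftrightarrow> integrable lborel (\<lambda>t. F (c + t))"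
    by (rule integrable_distr_eq) auto
  then show ?thesis by (simp add: lborel_distr_plus)
qed

lemma shift_integral:
  fixes F :: "'a::euclidean_space \<Rightarrow> 'b::{banach, second_countable_topology}"
  assumes [measurable]: "F \<in> borel_measurable borel"
  shows "(\<integral>t. F (c + t) \<partial>lborel) = integral\<^sup>L lborel F"
proof -
  have "integral\<^sup>L (distr lborel borel ((+) c)) F = (\<integral>t. F (c + t) \<partial>lborel)"
    by (rule integral_distr) auto
  then show ?thesis by (simp add: lborel_distr_plus)
qed

lemma shift_AE:
  fixes c :: "'a::euclidean_space"
  assumes P: "Measurable.pred borel P" and ae: "AE z in lborel. P z"
  shows "AE t in lborel. P (c + t)"
proof -
  have s: "{x \<in> space borel. P x} \<in> sets borel" using P by measurable
  have "AE z in distr lborel borel ((+) c). P z" unfolding lborel_distr_plus[of c] using ae .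
  then show ?thesis by (subst (asm) AE_distr_iff[OF _ s]) auto
qed

lemma e1_norm[simp]: "norm (e1 s) = 1"
  using norm_ex[of 1 s] by (simp add: ex_e1)

lemma e1_cont[measurable]: "e1 \<in> borel_measurable borel"
  unfolding e1_def by (intro borel_measurable_continuous_onI continuous_intros)

lemma abs_k_one:
  fixes k :: real assumes "0 \<le> k" "k powr p = 1" "p \<noteq> 0"
  shows "k = 1"
proof -
  have "k \<noteq> 0" using assms by auto
  then have "exp (p * ln k) = 1" using assms by (simp add: powr_def)
  then have "p * ln k = 0" by simp
  then have "ln k = 0" using assms by simp
  then show ?thesis using assms \<open>k \<noteq> 0\<close> by simp
qed

lemma K1:
  fixes \<delta> :: "'a::euclidean_space \<times> 'a" and u :: "('a \<Rightarrow> complex) \<Rightarrow> complex"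
  assumes u: "u \<in> tempered" "u \<noteq> (\<lambda>f. 0)" and p: "1 \<le> p" and Lp: "dist_in_Lp p u"
    and rel: "rho_dist \<delta> u = (\<lambda>f. k * u f)"
  shows "\<delta> = 0"
proof -
  obtain x w where \<delta>: "\<delta> = (x, w)" by (cases \<delta>)
  obtain g where gm: "g \<in> borel_measurable lborel" and gp: "integrable lborel (\<lambda>x. cmod (g x) powr p)"
    and gf: "\<forall>f\<in>schwartz. integrable lborel (\<lambda>x. g x * f x) \<and> u f = (LINT x|lborel. g x * f x)"
    using Lp unfolding dist_in_Lp_def by blast
  have gb[measurable]: "g \<in> borel_measurable borel" using gm by simp
  define a where "a = (1/2) *\<^sub>R x"
  have Q: "rho (neg \<delta>) f = (\<lambda>t. e1 (w \<bullet> (t + a)) * f (t + x))" for f :: "'a \<Rightarrow> complex"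
    by (simp add: rho_eq neg_def \<delta> a_def)
  have rel1: "u (rho (neg \<delta>) f) = k * u f" if f: "f \<in> schwartz" for f
    using fun_cong[OF rel, of f] f by (simp add: rho_dist_eq)
  define hh where "hh z = g (z - x) * e1 (w \<bullet> (z - x + a)) - k * g z" for z
  have hhm: "hh \<in> borel_measurable lborel" unfolding hh_def by measurable
  have shiftF: "(\<lambda>z. g (z - x) * e1 (w \<bullet> (z - x + a)) * f z) =
      (\<lambda>z. (\<lambda>t. g t * rho (neg \<delta>) f t) ((- x) + z))" for f
    by (rule ext) (simp add: Q algebra_simps)
  have hhf: "integrable lborel (\<lambda>z. hh z * f z) \<and> (\<integral>z. hh z * f z \<partial>lborel) = 0"
    if f: "f \<in> schwartz" for f
  proof -
    have Qs: "rho (neg \<delta>) f \<in> schwartz" by (rule schwartz_rho[OF f])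
    have FI: "integrable lborel (\<lambda>t. g t * rho (neg \<delta>) f t)" using gf Qs by blast
    have Fm: "(\<lambda>t. g t * rho (neg \<delta>) f t) \<in> borel_measurable borel"
      using borel_measurable_integrable[OF FI] by simp
    have fe: "(\<lambda>z. g (z - x) * e1 (w \<bullet> (z - x + a)) * f z) = (\<lambda>z. g (- x + z) * rho (neg \<delta>) f (- x + z))"
      by (simp add: Q fun_eq_iff mult.assoc)
    have A: "integrable lborel (\<lambda>z. g (z - x) * e1 (w \<bullet> (z - x + a)) * f z)"
      unfolding fe using shift_integrable[OF Fm, of "- x"] FI by simp
    have B: "(\<integral>z. g (z - x) * e1 (w \<bullet> (z - x + a)) * f z \<partial>lborel) = u (rho (neg \<delta>) f)"
      unfolding fe using shift_integral[OF Fm, of "- x"] gf Qs by simp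
    have C: "integrable lborel (\<lambda>z. g z * f z)" "u f = (\<integral>z. g z * f z \<partial>lborel)" using gf f by auto
    have eq: "(\<lambda>z. hh z * f z) = (\<lambda>z. g (z - x) * e1 (w \<bullet> (z - x + a)) * f z - k * (g z * f z))"
      by (simp add: hh_def fun_eq_iff algebra_simps)
    have I: "integrable lborel (\<lambda>z. hh z * f z)"
      unfolding eq using A C by (intro Bochner_Integration.integrable_diff integrable_mult_right) auto
    have "(\<integral>z. hh z * f z \<partial>lborel) = u (rho (neg \<delta>) f) - k * u f"
      unfolding eq using A C B by (simp add: Bochner_Integration.integral_diff)
    also have "\<dots> = 0" using rel1[OF f] by simp
    finally show ?thesis using I by simp
  qed
  have AEh: "AE z in lborel. hh z = 0"
    by (rule FL[OF hhm]) (use hhf in auto)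
  have gnz: "\<not> (AE z in lborel. g z = 0)"
  proof
    assume ae: "AE z in lborel. g z = 0"
    have "u f = 0" for f
    proof (cases "f \<in> schwartz")
      case True
      then have "u f = (LINT x|lborel. g x * f x)" using gf by blast
      also have "\<dots> = 0"
        by (rule integral_eq_zero_AE) (use ae in auto)
      finally show ?thesis .
    next
      case False then show ?thesis using temperedD(1)[OF u(1)] by simp
    qed
    then show False using u(2) by auto
  qed
  have AE1: "AE z in lborel. g (z - x) * e1 (w \<bullet> (z - x + a)) = k * g z"
    using AEh by eventually_elim (simp add: hh_def)
  have AEn: "AE z in lborel. cmod (g (z - x)) = cmod k * cmod (g z)"
    using AE1
  proof eventually_elim
    case (elim z)
    then have "cmod (g (z - x) * e1 (w \<bullet> (z - x + a))) = cmod (k * g z)" by simp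
    then show ?case by (simp add: norm_mult)
  qed
  define P where "P z = cmod (g z) powr p" for z
  have Pm[measurable]: "P \<in> borel_measurable borel" unfolding P_def by measurable
  have Pi: "integrable lborel P" using gp unfolding P_def by simp
  have Pnn: "0 \<le> P z" for z unfolding P_def by simp
  have "(\<integral>z. P (- x + z) \<partial>lborel) = integral\<^sup>L lborel P" by (rule shift_integral[OF Pm])
  moreover have "(\<integral>z. P (- x + z) \<partial>lborel) = (\<integral>z. cmod k powr p * P z \<partial>lborel)"
  proof (rule integral_cong_AE)
    show "AE z in lborel. P (- x + z) = cmod k powr p * P z"
      using AEn by eventually_elim (simp add: P_def powr_mult)
  qed auto
  ultimately have IP: "integral\<^sup>L lborel P = cmod k powr p * integral\<^sup>L lborel P" by simp
  have Ipos: "integral\<^sup>L lborel P \<noteq> 0"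
  proof
    assume "integral\<^sup>L lborel P = 0"
    moreover have Pae: "AE z in lborel. 0 \<le> P z" using Pnn by simp
    ultimately have "AE z in lborel. P z = 0"
      using integral_nonneg_eq_0_iff_AE[OF Pi Pae] by blast
    then have "AE z in lborel. g z = 0" by eventually_elim (simp add: P_def)
    then show False using gnz by simp
  qed
  have kp: "cmod k powr p = 1" using IP Ipos by simp
  have k1: "cmod k = 1"
    by (rule abs_k_one[OF norm_ge_zero kp]) (use p in simp)
  have AEeq: "AE z in lborel. cmod (g (z - x)) = cmod (g z)"
    using AEn by eventually_elim (simp add: k1)
  have ballm[measurable]: "\<And>R. ball (0::'a) R \<in> sets borel" by simp
  have Pml[measurable]: "P \<in> borel_measurable lborel" using Pm by simp
  have x0: "x = 0"
  proof (rule ccontr)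
    assume xnz: "x \<noteq> 0"
    have AEk: "AE z in lborel. cmod (g (z - real n *\<^sub>R x)) = cmod (g z)" for n
    proof (induction n)
      case 0 show ?case by simp
    next
      case (Suc n)
      have "AE t in lborel. cmod (g ((- x + t) - real n *\<^sub>R x)) = cmod (g (- x + t))"
        by (rule shift_AE[OF _ Suc.IH]) measurable
      then show ?case using AEeq
      proof eventually_elim
        case (elim z)
        have e1: "z - real (Suc n) *\<^sub>R x = (- x + z) - real n *\<^sub>R x" by (simp add: algebra_simps)
        have e2: "- x + z = z - x" by simp
        show ?case using elim unfolding e1 e2 by simp
      qed
    qed
    have ball0: "(\<integral>z. indicator (ball 0 R) z * P z \<partial>lborel) = 0" for R :: real
    proof -
      have Jn: "(\<integral>z. indicator (ball 0 R) z * P z \<partial>lborel) =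
          (\<integral>t. indicator (ball 0 R) (real n *\<^sub>R x + t) * P t \<partial>lborel)" for n
      proof -
        have "(\<integral>z. indicator (ball 0 R) z * P z \<partial>lborel) =
            (\<integral>z. indicator (ball 0 R) z * P (z - real n *\<^sub>R x) \<partial>lborel)"
        proof (rule integral_cong_AE)
          show "AE z in lborel. indicator (ball 0 R) z * P z = indicator (ball 0 R) z * P (z - real n *\<^sub>R x)"
            using AEk[of n] by eventually_elim (simp add: P_def)
        qed measurable
        also have "\<dots> = (\<integral>t. indicator (ball 0 R) (real n *\<^sub>R x + t) * P t \<partial>lborel)"
          using shift_integral[of "\<lambda>z. indicator (ball 0 R) z * P (z - real n *\<^sub>R x)" "real n *\<^sub>R x"]
          by simp
        finally show ?thesis .
      qed
      define sN where "sN n t = indicator (ball 0 R) (real n *\<^sub>R x + t) * P t" for n t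
      have L1: "AE t in lborel. (\<lambda>n. sN n t) \<longlonglongrightarrow> 0"
      proof (intro AE_I2 tendsto_eventually)
        fix t :: 'a
        have nx: "norm x > 0" using xnz by simp
        obtain N :: nat where N: "(R + norm t) / norm x < real N" using reals_Archimedean2 by blast
        have "sN n t = 0" if n: "n \<ge> N" for n
        proof -
          have "(R + norm t) / norm x < real n" using N n by (meson less_le_trans of_nat_le_iff)
          then have "R + norm t < real n * norm x" using nx by (simp add: field_simps)
          moreover have "real n * norm x - norm t \<le> norm (real n *\<^sub>R x + t)"
            using norm_triangle_ineq2[of "real n *\<^sub>R x" "- t"] by simp
          ultimately have "R < norm (real n *\<^sub>R x + t)" by simp
          then show ?thesis by (simp add: indicator_def sN_def)
        qed
        then show "\<forall>\<^sub>F n in sequentially. sN n t = 0"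
          unfolding eventually_sequentially by blast
      qed
      have L2: "AE t in lborel. norm (sN n t) \<le> P t" for n
        using Pnn by (intro AE_I2) (simp add: indicator_def sN_def)
      have sNm: "sN n \<in> borel_measurable lborel" for n unfolding sN_def by measurable
      have zm: "(\<lambda>t. 0::real) \<in> borel_measurable lborel" by simp
      have lim: "(\<lambda>n. integral\<^sup>L lborel (sN n)) \<longlonglongrightarrow> 0"
        using integral_dominated_convergence[OF zm sNm Pi L1 L2] by simp
      have sNe: "sN = (\<lambda>n t. indicator (ball 0 R) (real n *\<^sub>R x + t) * P t)" by (simp add: fun_eq_iff sN_def)
      have lim2: "(\<lambda>n. \<integral>t. indicator (ball 0 R) (real n *\<^sub>R x + t) * P t \<partial>lborel) \<longlonglongrightarrow> 0"
        using lim unfolding sNe .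
      moreover have "(\<lambda>n::nat. \<integral>z. indicator (ball 0 R) z * P z \<partial>lborel) =
          (\<lambda>n. \<integral>t. indicator (ball 0 R) (real n *\<^sub>R x + t) * P t \<partial>lborel)"
        by (rule ext) (rule Jn)
      ultimately have "(\<lambda>n::nat. \<integral>z. indicator (ball 0 R) z * P z \<partial>lborel) \<longlonglongrightarrow> 0" by simp
      then show ?thesis by (simp add: LIMSEQ_const_iff)
    qed
    have Am: "AE z in lborel. indicator (ball 0 (real m)) z * P z = 0" for m :: nat
    proof -
      have Ii: "integrable lborel (\<lambda>z. indicator (ball 0 (real m)) z * P z)"
        using integrable_mult_indicator[of "ball 0 (real m)" lborel P] Pi by simp
      have Iae: "AE z in lborel. 0 \<le> indicator (ball 0 (real m)) z * P z" using Pnn by simp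
      show ?thesis
        using integral_nonneg_eq_0_iff_AE[OF Ii Iae] ball0[of "real m"] by blast
    qed
    have "AE z in lborel. \<forall>m::nat. indicator (ball 0 (real m)) z * P z = 0"
      unfolding AE_all_countable using Am by blast
    then have "AE z in lborel. g z = 0"
    proof eventually_elim
      case (elim z)
      obtain m :: nat where "norm z < real m" using reals_Archimedean2 by blast
      then have "P z = 0" using elim[rule_format, of m] by (simp add: indicator_def)
      then show ?case by (simp add: P_def)
    qed
    then show False using gnz by simp
  qed
  have AE2: "AE z in lborel. g z * e1 (w \<bullet> z) = k * g z"
    using AE1 x0 by (simp add: a_def)
  have w0: "w = 0"
  proof (rule ccontr)
    assume wnz: "w \<noteq> 0"
    have knz: "k \<noteq> 0" using k1 by auto
    define c where "c = Im (Ln k) / (2 * pi)"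
    define N where "N = (\<Union>n::int. {z::'a. w \<bullet> z = c + of_int n})"
    have Nneg: "negligible N" unfolding N_def
      by (intro negligible_countable_Union) (auto intro!: negligible_hyperplane simp: wnz)
    have Nb: "N \<in> sets borel" unfolding N_def by measurable
    have Nnull: "N \<in> null_sets lborel"
      using Nneg Nb by (auto simp: null_sets_completion_iff negligible_iff_null_sets)
    have inN: "z \<in> N" if e: "e1 (w \<bullet> z) = k" for z
    proof -
      have "exp (2 * of_real pi * \<i> * of_real (w \<bullet> z)) = exp (Ln k)"
        using e knz by (simp add: e1_def exp_Ln)
      then obtain n :: int where n: "2 * of_real pi * \<i> * of_real (w \<bullet> z) = Ln k + (of_int (2 * n) * pi) * \<i>"
        by (auto simp: exp_eq)
      have "Im (2 * of_real pi * \<i> * of_real (w \<bullet> z)) = Im (Ln k + (of_int (2 * n) * pi) * \<i>)"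
        using n by simp
      then have "2 * pi * (w \<bullet> z) = Im (Ln k) + 2 * of_int n * pi" by simp
      then have "w \<bullet> z = c + of_int n" unfolding c_def by (simp add: field_simps)
      then show ?thesis unfolding N_def by blast
    qed
    have "AE z in lborel. g z = 0"
      using AE2 AE_not_in[OF Nnull]
    proof eventually_elim
      case (elim z)
      then have "e1 (w \<bullet> z) \<noteq> k" using inN by blast
      moreover have "g z * (e1 (w \<bullet> z) - k) = 0" using elim by (simp add: algebra_simps)
      ultimately show ?case by simp
    qed
    then show False using gnz by simp
  qed
  show ?thesis using x0 w0 \<delta> by (simp add: zero_prod_def)
qed

theorem proposition5p1:
  fixes T :: "('a::euclidean_space \<Rightarrow> complex) \<Rightarrow> (('a \<Rightarrow> complex) \<Rightarrow> complex)"
    and \<Phi> :: "'a \<times> 'a \<Rightarrow> 'a \<times> 'a"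
  assumes dim: "even DIM('a)"
    and maps: "\<forall>F\<in>schwartz. T F \<in> tempered"
    and lin_add: "\<forall>F\<in>schwartz. \<forall>G\<in>schwartz. T (\<lambda>x. F x + G x) = (\<lambda>f. T F f + T G f)"
    and lin_smult: "\<forall>F\<in>schwartz. \<forall>c. T (\<lambda>x. c * F x) = (\<lambda>f. c * T F f)"
    and nonzero: "\<exists>F\<in>schwartz. T F \<noteq> (\<lambda>f. 0)"
    and covar: "\<forall>l. \<exists>c::complex. \<forall>F\<in>schwartz.
                   T (rho l F) = (\<lambda>f. c * rho_dist (\<Phi> l) (T F) f)"
    and extra: "(\<exists>F\<in>schwartz. T F \<noteq> (\<lambda>f. 0) \<and> (\<exists>p::real. 1 \<le> p \<and> dist_in_Lp p (T F)))
                \<or> weak_star_dense (T ` schwartz)"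
  shows "\<forall>l1 l2. \<Phi> (l1 + l2) = \<Phi> l1 + \<Phi> l2"
proof (intro allI)
  fix l1 l2
  obtain k where k: "\<forall>F\<in>schwartz. rho_dist (\<Phi> (l1 + l2) - (\<Phi> l1 + \<Phi> l2)) (T F) = (\<lambda>f. k * T F f)"
    using reduction[OF maps lin_smult nonzero covar] by blast
  have "\<Phi> (l1 + l2) - (\<Phi> l1 + \<Phi> l2) = 0"
    using extra
  proof
    assume "\<exists>F\<in>schwartz. T F \<noteq> (\<lambda>f. 0) \<and> (\<exists>p::real. 1 \<le> p \<and> dist_in_Lp p (T F))"
    then obtain F p where F: "F \<in> schwartz" "T F \<noteq> (\<lambda>f. 0)" "1 \<le> p" "dist_in_Lp p (T F)" by blast
    have "T F \<in> tempered" using maps F(1) by blast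
    moreover have "rho_dist (\<Phi> (l1 + l2) - (\<Phi> l1 + \<Phi> l2)) (T F) = (\<lambda>f. k * T F f)" using k F(1) by blast
    ultimately show ?thesis using K1[OF _ F(2) F(3) F(4)] by blast
  next
    assume wd: "weak_star_dense (T ` schwartz)"
    obtain F0 where F0: "F0 \<in> schwartz" "T F0 \<noteq> (\<lambda>f. 0)" using nonzero by blast
    have "T (\<lambda>x. 0 * F0 x) = (\<lambda>f. 0 * T F0 f)" using lin_smult F0(1) by blast
    then have T0: "T (\<lambda>x. 0) = (\<lambda>f. 0)" by simp
    obtain y0 where y0: "F0 y0 \<noteq> 0"
    proof (rule ccontr)
      assume "\<not> thesis"
      then have "\<forall>y. F0 y = 0" using that by blast
      then have "F0 = (\<lambda>x. 0)" by auto
      then show False using F0 T0 by simp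
    qed
    have rel: "\<forall>v\<in>T ` schwartz. rho_dist (\<Phi> (l1 + l2) - (\<Phi> l1 + \<Phi> l2)) v = (\<lambda>f. k * v f)"
      using k by blast
    show ?thesis by (rule K2[OF wd rel F0(1) y0])
  qed
  then show "\<Phi> (l1 + l2) = \<Phi> l1 + \<Phi> l2" by simp
qed


end
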